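(* Let $\mu$ be a measure on $[0,1]$, let $\Phi=\{\phi_j\}_{j=1}^\infty$ be an orthonormal basis of $L^2([0,1],\mu)$, and let $A>0$, $k>1/2$, $C>0$ be constants. Then, as $\epsilon\to0$, $$M_2(\epsilon,\Theta_k(\Phi,A,C))\asymp \epsilon^{-2/(2k-1)}.$$
   Context: Every $f\in L^2([0,1],\mu)$ has a unique expansion $f=\sum_{j\ge1}\theta_j\phi_j$ with $\sum_j\theta_j^2<\infty$. The approximate sparsity class $\Theta_k(\Phi,A,C)$ is the set of $f=\sum_j\theta_j\phi_j\in L^2([0,1],\mu)$ such that (a) the non-increasing rearrangement $\{\theta_{(j)}\}_{j\ge1}$ of the coefficients by absolute value ($\theta_{(j)}$ is the $j$-th largest in absolute value) satisfies $|\theta_{(j)}|\le Aj^{-k}$ for all $j\ge1$, and (b) for all $J\ge1$, $\sum_{j=J+1}^\infty\theta_j^2\le CJ^{-2k+1}$. For $\mathcal{F}\subseteq L^2([0,1],\mu)$, $M_2(\epsilon,\mathcal{F}):=\log N(\epsilon,\mathcal{F})$, where $N(\epsilon,\mathcal{F})$ is the cardinality of the largest $\epsilon$-packing set of $\mathcal{F}$ in the $L^2([0,1],\mu)$ distance. $a(\epsilon)\asymp b(\epsilon)$ means there are constants $0<c_1\le c_2<\infty$ with $c_1b(\epsilon)\le a(\epsilon)\le c_2 b(\epsilon)$ for all sufficiently small $\epsilon$. *)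

theory Defs
  imports "HOL-Analysis.Analysis" "HOL-Library.Extended_Nat"
begin

definition measure_on_unit_interval :: "real measure \<Rightarrow> bool" where
  "measure_on_unit_interval M \<longleftrightarrow>
     space M = {0..1} \<and> sets M = sets (restrict_space borel {0..1})"

text \<open>Square-integrable (real-valued) functions, i.e. representatives of L^2(M).\<close>
definition L2 :: "real measure \<Rightarrow> (real \<Rightarrow> real) set" where
  "L2 M = {f. f \<in> borel_measurable M \<and> integrable M (\<lambda>x. (f x)\<^sup>2)}"

definition L2_inner :: "real measure \<Rightarrow> (real \<Rightarrow> real) \<Rightarrow> (real \<Rightarrow> real) \<Rightarrow> real" where
  "L2_inner M f g = (\<integral>x. f x * g x \<partial>M)"

definition L2_dist :: "real measure \<Rightarrow> (real \<Rightarrow> real) \<Rightarrow> (real \<Rightarrow> real) \<Rightarrow> real" where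
  "L2_dist M f g = sqrt (\<integral>x. (f x - g x)\<^sup>2 \<partial>M)"

definition orthonormal_basis_L2 :: "real measure \<Rightarrow> (nat \<Rightarrow> real \<Rightarrow> real) \<Rightarrow> bool" where
  "orthonormal_basis_L2 M \<phi> \<longleftrightarrow>
     (\<forall>j\<ge>1. \<phi> j \<in> L2 M) \<and>
     (\<forall>i\<ge>1. \<forall>j\<ge>1. L2_inner M (\<phi> i) (\<phi> j) = (if i = j then 1 else 0)) \<and>
     (\<forall>f \<in> L2 M. (\<lambda>n. (\<integral>x. (f x - (\<Sum>j=1..n. L2_inner M f (\<phi> j) * \<phi> j x))\<^sup>2 \<partial>M))
                     \<longlonglongrightarrow> 0)"

text \<open>Non-increasing rearrangement of the absolute values of \<open>\<theta>_1, \<theta>_2, \<dots>\<close>: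
  \<open>\<theta>_(j)\<close> (for j \<ge> 1) is the j-th largest \<open>|\<theta>_i|\<close> (i \<ge> 1), counted with multiplicity,
  i.e. the least t \<ge> 0 such that fewer than j indices have \<open>|\<theta>_i| > t\<close>.\<close>
definition rearr :: "(nat \<Rightarrow> real) \<Rightarrow> nat \<Rightarrow> real" where
  "rearr \<theta> j = Inf {t. 0 \<le> t \<and> finite {i. i \<ge> 1 \<and> \<bar>\<theta> i\<bar> > t} \<and>
                        card {i. i \<ge> 1 \<and> \<bar>\<theta> i\<bar> > t} < j}"

definition Theta :: "real measure \<Rightarrow> (nat \<Rightarrow> real \<Rightarrow> real) \<Rightarrow> real \<Rightarrow> real \<Rightarrow> real
                      \<Rightarrow> (real \<Rightarrow> real) set" where
  "Theta M \<phi> k A C =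
     {f \<in> L2 M.
        let \<theta> = (\<lambda>j. L2_inner M f (\<phi> j)) in
        (\<forall>j\<ge>1. \<bar>rearr \<theta> j\<bar> \<le> A * real j powr (-k)) \<and>
        (\<forall>J\<ge>1. (\<Sum>i. (\<theta> (i + J + 1))\<^sup>2) \<le> C * real J powr (-2*k + 1))}"

definition packing_number :: "real measure \<Rightarrow> real \<Rightarrow> (real \<Rightarrow> real) set \<Rightarrow> enat" where
  "packing_number M \<epsilon> F =
     Sup {enat (card S) | S. finite S \<and> S \<subseteq> F \<and>
            (\<forall>f\<in>S. \<forall>g\<in>S. f \<noteq> g \<longrightarrow> L2_dist M f g > \<epsilon>)}"

text \<open>Metric entropy \<open>M_2(\<epsilon>,F) = log N(\<epsilon>,F)\<close> (natural log; only meaningful when N is finite).\<close>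
definition metric_entropy :: "real measure \<Rightarrow> real \<Rightarrow> (real \<Rightarrow> real) set \<Rightarrow> real" where
  "metric_entropy M \<epsilon> F = ln (real (the_enat (packing_number M \<epsilon> F)))"

end

theory Submission
  imports Defs
begin


lemma L2_mult_integrable:
  assumes "f \<in> L2 M" "g \<in> L2 M"
  shows "integrable M (\<lambda>x. f x * g x)"
proof (rule Bochner_Integration.integrable_bound[where f="\<lambda>x. (f x)\<^sup>2 + (g x)\<^sup>2"])
  show "integrable M (\<lambda>x. (f x)\<^sup>2 + (g x)\<^sup>2)" using assms by (auto simp: L2_def)
  show "(\<lambda>x. f x * g x) \<in> borel_measurable M" using assms by (auto simp: L2_def)
  show "AE x in M. norm (f x * g x) \<le> norm ((f x)\<^sup>2 + (g x)\<^sup>2)"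
  proof (intro AE_I2)
    fix x
    have "2 * \<bar>f x * g x\<bar> \<le> (f x)\<^sup>2 + (g x)\<^sup>2"
      using sum_squares_bound[of "\<bar>f x\<bar>" "\<bar>g x\<bar>"] by (simp add: abs_mult)
    then show "norm (f x * g x) \<le> norm ((f x)\<^sup>2 + (g x)\<^sup>2)" by auto
  qed
qed

lemma L2_lin:
  assumes "f \<in> L2 M" "g \<in> L2 M"
  shows "(\<lambda>x. a * f x + b * g x) \<in> L2 M"
proof -
  have e: "(\<lambda>x. (a * f x + b * g x)\<^sup>2) = (\<lambda>x. a\<^sup>2 * (f x)\<^sup>2 + (2*a*b) * (f x * g x) + b\<^sup>2 * (g x)\<^sup>2)"
    by (auto simp: power2_eq_square algebra_simps)
  have "integrable M (\<lambda>x. a\<^sup>2 * (f x)\<^sup>2 + (2*a*b) * (f x * g x) + b\<^sup>2 * (g x)\<^sup>2)"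
    using assms L2_mult_integrable[OF assms] unfolding L2_def by auto
  then have "integrable M (\<lambda>x. (a * f x + b * g x)\<^sup>2)" unfolding e .
  then show ?thesis using assms unfolding L2_def by auto
qed

lemma L2_zero: "(\<lambda>x. 0) \<in> L2 M" by (simp add: L2_def)

lemma L2_sum:
  assumes "\<And>j. j \<in> I \<Longrightarrow> g j \<in> L2 M"
  shows "(\<lambda>x. \<Sum>j\<in>I. c j * g j x) \<in> L2 M"
  using assms
proof (induction I rule: infinite_finite_induct)
  case (infinite A) then show ?case by (simp add: L2_zero)
next
  case empty then show ?case by (simp add: L2_zero)
next
  case (insert j F)
  have "(\<lambda>x. c j * g j x + 1 * (\<Sum>j\<in>F. c j * g j x)) \<in> L2 M"
    by (rule L2_lin) (use insert in auto)
  then show ?case using insert by simp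
qed

lemma L2_diff:
  assumes "f \<in> L2 M" "g \<in> L2 M"
  shows "(\<lambda>x. f x - g x) \<in> L2 M"
  using L2_lin[OF assms, of 1 "-1"] by simp


context
  fixes M :: "real measure" and \<phi> :: "nat \<Rightarrow> real \<Rightarrow> real"
  assumes ONB: "orthonormal_basis_L2 M \<phi>"
begin

lemma phi_L2: "j \<ge> 1 \<Longrightarrow> \<phi> j \<in> L2 M"
  using ONB by (auto simp: orthonormal_basis_L2_def)

lemma phi_ortho: "i \<ge> 1 \<Longrightarrow> j \<ge> 1 \<Longrightarrow> (\<integral>x. \<phi> i x * \<phi> j x \<partial>M) = (if i = j then 1 else 0)"
  using ONB by (auto simp: orthonormal_basis_L2_def L2_inner_def)

lemma phi_complete: "f \<in> L2 M \<Longrightarrow>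
   (\<lambda>n. (\<integral>x. (f x - (\<Sum>j=1..n. L2_inner M f (\<phi> j) * \<phi> j x))\<^sup>2 \<partial>M)) \<longlonglongrightarrow> 0"
  using ONB by (auto simp: orthonormal_basis_L2_def)

lemma cross_expansion:
  assumes "f \<in> L2 M" "finite I" "\<And>j. j \<in> I \<Longrightarrow> j \<ge> 1"
  shows "(\<integral>x. f x * (\<Sum>j\<in>I. c j * \<phi> j x) \<partial>M) = (\<Sum>j\<in>I. c j * L2_inner M f (\<phi> j))"
proof -
  have "(\<integral>x. f x * (\<Sum>j\<in>I. c j * \<phi> j x) \<partial>M) = (\<integral>x. (\<Sum>j\<in>I. c j * (f x * \<phi> j x)) \<partial>M)"
    by (simp add: sum_distrib_left algebra_simps)
  also have "\<dots> = (\<Sum>j\<in>I. (\<integral>x. c j * (f x * \<phi> j x) \<partial>M))"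
    apply (subst Bochner_Integration.integral_sum) using assms L2_mult_integrable phi_L2 by auto
  also have "\<dots> = (\<Sum>j\<in>I. c j * L2_inner M f (\<phi> j))"
    by (simp add: L2_inner_def)
  finally show ?thesis .
qed

lemma inner_expansion:
  assumes "finite I" "\<And>j. j \<in> I \<Longrightarrow> j \<ge> 1" "i \<ge> 1"
  shows "L2_inner M (\<lambda>x. \<Sum>j\<in>I. c j * \<phi> j x) (\<phi> i) = (if i \<in> I then c i else 0)"
proof -
  have "L2_inner M (\<lambda>x. \<Sum>j\<in>I. c j * \<phi> j x) (\<phi> i) = (\<integral>x. \<phi> i x * (\<Sum>j\<in>I. c j * \<phi> j x) \<partial>M)"
    by (simp add: L2_inner_def mult.commute)
  also have "\<dots> = (\<Sum>j\<in>I. c j * L2_inner M (\<phi> i) (\<phi> j))"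
    by (rule cross_expansion) (use assms phi_L2 in auto)
  also have "\<dots> = (\<Sum>j\<in>I. if j = i then c j else 0)"
    by (rule sum.cong) (use assms phi_ortho in \<open>auto simp: L2_inner_def\<close>)
  also have "\<dots> = (if i \<in> I then c i else 0)"
    using assms by (simp add: sum.delta')
  finally show ?thesis .
qed

lemma norm_expansion:
  assumes "finite I" "\<And>j. j \<in> I \<Longrightarrow> j \<ge> 1"
  shows "(\<integral>x. (\<Sum>j\<in>I. c j * \<phi> j x)\<^sup>2 \<partial>M) = (\<Sum>j\<in>I. (c j)\<^sup>2)"
proof -
  have L: "(\<lambda>x. \<Sum>j\<in>I. c j * \<phi> j x) \<in> L2 M" by (rule L2_sum) (use assms phi_L2 in auto)
  have "(\<integral>x. (\<Sum>j\<in>I. c j * \<phi> j x)\<^sup>2 \<partial>M)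
      = (\<integral>x. (\<Sum>i\<in>I. c i * \<phi> i x) * (\<Sum>j\<in>I. c j * \<phi> j x) \<partial>M)"
    by (simp add: power2_eq_square)
  also have "\<dots> = (\<Sum>j\<in>I. c j * L2_inner M (\<lambda>x. \<Sum>i\<in>I. c i * \<phi> i x) (\<phi> j))"
    by (rule cross_expansion[OF L assms])
  also have "\<dots> = (\<Sum>j\<in>I. (c j)\<^sup>2)"
    by (rule sum.cong) (use assms inner_expansion in \<open>auto simp: power2_eq_square\<close>)
  finally show ?thesis .
qed

lemma bessel_eq:
  assumes "f \<in> L2 M"
  shows "(\<integral>x. (f x - (\<Sum>j=1..n. L2_inner M f (\<phi> j) * \<phi> j x))\<^sup>2 \<partial>M)
     = (\<integral>x. (f x)\<^sup>2 \<partial>M) - (\<Sum>j=1..n. (L2_inner M f (\<phi> j))\<^sup>2)"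
proof -
  define S where "S = (\<lambda>x. \<Sum>j=1..n. L2_inner M f (\<phi> j) * \<phi> j x)"
  have SL: "S \<in> L2 M" unfolding S_def by (rule L2_sum) (use phi_L2 in auto)
  have e: "\<And>x. (f x - S x)\<^sup>2 = (f x)\<^sup>2 - 2 * (f x * S x) + (S x)\<^sup>2"
    by (simp add: power2_eq_square algebra_simps)
  have i1: "integrable M (\<lambda>x. (f x)\<^sup>2)" "integrable M (\<lambda>x. (S x)\<^sup>2)"
    using assms SL by (auto simp: L2_def)
  have i2: "integrable M (\<lambda>x. f x * S x)" using L2_mult_integrable[OF assms SL] .
  have "(\<integral>x. (f x - S x)\<^sup>2 \<partial>M) = (\<integral>x. (f x)\<^sup>2 \<partial>M) - 2 * (\<integral>x. f x * S x \<partial>M) + (\<integral>x. (S x)\<^sup>2 \<partial>M)"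
    unfolding e using i1 i2 by simp
  also have "(\<integral>x. f x * S x \<partial>M) = (\<Sum>j=1..n. (L2_inner M f (\<phi> j))\<^sup>2)"
    unfolding S_def by (subst cross_expansion[OF assms]) (auto simp: power2_eq_square)
  also have "(\<integral>x. (S x)\<^sup>2 \<partial>M) = (\<Sum>j=1..n. (L2_inner M f (\<phi> j))\<^sup>2)"
    unfolding S_def by (subst norm_expansion) auto
  finally show ?thesis unfolding S_def by simp
qed

lemma bessel_le:
  assumes "f \<in> L2 M"
  shows "(\<Sum>j=1..n. (L2_inner M f (\<phi> j))\<^sup>2) \<le> (\<integral>x. (f x)\<^sup>2 \<partial>M)"
proof -
  have "0 \<le> (\<integral>x. (f x - (\<Sum>j=1..n. L2_inner M f (\<phi> j) * \<phi> j x))\<^sup>2 \<partial>M)"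
    by simp
  then show ?thesis using bessel_eq[OF assms, of n] by linarith
qed

lemma parseval_lim:
  assumes "f \<in> L2 M"
  shows "(\<lambda>n. \<Sum>j=1..n. (L2_inner M f (\<phi> j))\<^sup>2) \<longlonglongrightarrow> (\<integral>x. (f x)\<^sup>2 \<partial>M)"
proof -
  have "(\<lambda>n. (\<integral>x. (f x)\<^sup>2 \<partial>M) - (\<Sum>j=1..n. (L2_inner M f (\<phi> j))\<^sup>2)) \<longlonglongrightarrow> 0"
    using phi_complete[OF assms] unfolding bessel_eq[OF assms] .
  then have "(\<lambda>n. (\<integral>x. (f x)\<^sup>2 \<partial>M) - ((\<integral>x. (f x)\<^sup>2 \<partial>M) - (\<Sum>j=1..n. (L2_inner M f (\<phi> j))\<^sup>2)))
     \<longlonglongrightarrow> (\<integral>x. (f x)\<^sup>2 \<partial>M) - 0"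
    by (intro tendsto_diff tendsto_const)
  then show ?thesis by simp
qed

end


lemma sum_pow_card:
  fixes x :: real
  assumes "finite A"
  shows "(\<Sum>U\<in>Pow A. x ^ card U) = (1 + x) ^ card A"
proof -
  have "(\<Prod>a\<in>A. x + 1) = (\<Sum>B\<in>Pow A. (\<Prod>a\<in>B. x) * (\<Prod>a\<in>A - B. 1))"
    by (rule prod_add[OF assms])
  then show ?thesis by (simp add: add.commute)
qed

lemma small_sets_card:
  fixes d :: real
  assumes "finite A" "d \<ge> 0"
  shows "real (card {U\<in>Pow A. real (card U) \<le> d}) \<le> 8 powr d * (9/8) ^ card A"
proof -
  let ?x = "1/8 :: real"
  have "real (card {U\<in>Pow A. real (card U) \<le> d}) = (\<Sum>U\<in>{U\<in>Pow A. real (card U) \<le> d}. 1)"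
    by simp
  also have "\<dots> \<le> (\<Sum>U\<in>{U\<in>Pow A. real (card U) \<le> d}. 8 powr (d - real (card U)))"
  proof (rule sum_mono)
    fix U assume "U \<in> {U\<in>Pow A. real (card U) \<le> d}"
    then have "d - real (card U) \<ge> 0" by auto
    then show "1 \<le> 8 powr (d - real (card U))"
      by (intro ge_one_powr_ge_zero) auto
  qed
  also have "\<dots> \<le> (\<Sum>U\<in>Pow A. 8 powr (d - real (card U)))"
    by (rule sum_mono2) (use assms in auto)
  also have "\<dots> = (\<Sum>U\<in>Pow A. ?x ^ card U * 8 powr d)"
    by (rule sum.cong) (auto simp: powr_diff powr_realpow power_one_over)
  also have "\<dots> = 8 powr d * (1 + ?x) ^ card A"
    using sum_pow_card[OF assms(1), of ?x] by (simp add: sum_distrib_left[symmetric] mult.commute)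
  finally show ?thesis by simp
qed


definition sd :: "'a set \<Rightarrow> 'a set \<Rightarrow> 'a set" where
  "sd T U = (T - U) \<union> (U - T)"

lemma sd_sd: "sd (sd U s) s = U" by (auto simp: sd_def)
lemma sd_self: "sd T T = {}" by (auto simp: sd_def)
lemma sd_comm: "sd T U = sd U T" by (auto simp: sd_def)

lemma ball_card:
  assumes "finite A" "s \<subseteq> A"
  shows "card {T\<in>Pow A. Q (card (sd T s))} = card {U\<in>Pow A. Q (card U)}"
proof -
  have "{T\<in>Pow A. Q (card (sd T s))} = (\<lambda>U. sd U s) ` {U\<in>Pow A. Q (card U)}"
  proof
    show "{T\<in>Pow A. Q (card (sd T s))} \<subseteq> (\<lambda>U. sd U s) ` {U\<in>Pow A. Q (card U)}"
    proof
      fix T assume "T \<in> {T\<in>Pow A. Q (card (sd T s))}"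
      then have "sd T s \<in> {U\<in>Pow A. Q (card U)}" using assms by (auto simp: sd_def)
      moreover have "T = sd (sd T s) s" by (simp add: sd_sd)
      ultimately show "T \<in> (\<lambda>U. sd U s) ` {U\<in>Pow A. Q (card U)}" by blast
    qed
    show "(\<lambda>U. sd U s) ` {U\<in>Pow A. Q (card U)} \<subseteq> {T\<in>Pow A. Q (card (sd T s))}"
      using assms by (auto simp: sd_sd) (auto simp: sd_def)
  qed
  moreover have "inj_on (\<lambda>U. sd U s) {U\<in>Pow A. Q (card U)}"
    by (metis (no_types, lifting) inj_onI sd_sd)
  ultimately show ?thesis by (simp add: card_image)
qed

lemma VG:
  fixes n :: nat
  shows "\<exists>P. P \<subseteq> Pow {1..n} \<and> (\<forall>T\<in>P. \<forall>U\<in>P. T \<noteq> U \<longrightarrow> real (card (sd T U)) > real n / 8)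
            \<and> 2 ^ n \<le> real (card P) * (8 powr (real n / 8) * (9/8) ^ n)"
proof -
  let ?A = "{1..n}"
  let ?d = "real n / 8"
  define G where "G = {P. P \<subseteq> Pow ?A \<and> (\<forall>T\<in>P. \<forall>U\<in>P. T \<noteq> U \<longrightarrow> real (card (sd T U)) > ?d)}"
  have fin: "finite (Pow ?A)" by simp
  have "{} \<in> G" by (simp add: G_def)
  moreover have "\<forall>Q. Q \<in> G \<longrightarrow> card Q < card (Pow ?A) + 1"
  proof (intro allI impI)
    fix Q assume "Q \<in> G"
    then have "Q \<subseteq> Pow ?A" by (simp add: G_def)
    then have "card Q \<le> card (Pow ?A)" by (rule card_mono[OF fin])
    then show "card Q < card (Pow ?A) + 1" by simp
  qed
  ultimately have "\<exists>x. x \<in> G \<and> (\<forall>y. y \<in> G \<longrightarrow> card y \<le> card x)"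
    by (rule Lattices_Big.ex_has_greatest_nat)
  then obtain P where P: "P \<in> G" and Pmax: "\<And>Q. Q \<in> G \<Longrightarrow> card Q \<le> card P"
    by blast
  have PA: "P \<subseteq> Pow ?A" using P by (simp add: G_def)
  have finP: "finite P" using PA fin finite_subset by blast
  have cover: "Pow ?A \<subseteq> (\<Union>s\<in>P. {T\<in>Pow ?A. real (card (sd T s)) \<le> ?d})"
  proof
    fix T assume T: "T \<in> Pow ?A"
    show "T \<in> (\<Union>s\<in>P. {T\<in>Pow ?A. real (card (sd T s)) \<le> ?d})"
    proof (rule ccontr)
      assume nc: "T \<notin> (\<Union>s\<in>P. {T\<in>Pow ?A. real (card (sd T s)) \<le> ?d})"
      have far: "real (card (sd T s)) > ?d" if sP: "s \<in> P" for s
      proof (rule ccontr)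
        assume "\<not> ?d < real (card (sd T s))"
        then have "T \<in> {T\<in>Pow ?A. real (card (sd T s)) \<le> ?d}" using T by simp
        then have "T \<in> (\<Union>s\<in>P. {T\<in>Pow ?A. real (card (sd T s)) \<le> ?d})" using sP by blast
        then show False using nc by blast
      qed
      have "T \<notin> P"
      proof
        assume "T \<in> P"
        then have "real (card (sd T T)) > ?d" by (rule far)
        then show False by (simp add: sd_self)
      qed
      have "insert T P \<subseteq> Pow ?A" using PA T by blast
      moreover have "\<forall>X\<in>insert T P. \<forall>Y\<in>insert T P. X \<noteq> Y \<longrightarrow> real (card (sd X Y)) > ?d"
      proof (intro ballI impI)
        fix X Y assume X: "X \<in> insert T P" and Y: "Y \<in> insert T P" and XY: "X \<noteq> Y"
        show "real (card (sd X Y)) > ?d"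
        proof (cases "X = T")
          case True
          then have "Y \<in> P" using Y XY by blast
          then show ?thesis using far[of Y] True by simp
        next
          case False
          then have XP: "X \<in> P" using X by blast
          show ?thesis
          proof (cases "Y = T")
            case True
            then show ?thesis using far[OF XP] True sd_comm[of X T] by simp
          next
            case False
            then have "Y \<in> P" using Y by blast
            then show ?thesis using P XP XY unfolding G_def by blast
          qed
        qed
      qed
      ultimately have "insert T P \<in> G" unfolding G_def by blast
      then have "card (insert T P) \<le> card P" by (rule Pmax)
      then show False using \<open>T \<notin> P\<close> finP by simp
    qed
  qed
  define B where "B = card {U\<in>Pow ?A. real (card U) \<le> ?d}"
  have fin_cover: "finite (\<Union>s\<in>P. {T\<in>Pow ?A. real (card (sd T s)) \<le> ?d})"
    by (rule finite_subset[OF _ fin]) blast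
  have "card (Pow ?A) \<le> card (\<Union>s\<in>P. {T\<in>Pow ?A. real (card (sd T s)) \<le> ?d})"
    by (rule card_mono[OF fin_cover cover])
  also have "\<dots> \<le> (\<Sum>s\<in>P. card {T\<in>Pow ?A. real (card (sd T s)) \<le> ?d})"
    by (rule card_UN_le[OF finP])
  also have "\<dots> = (\<Sum>s\<in>P. B)"
  proof (rule sum.cong[OF refl])
    fix s assume sP: "s \<in> P"
    then have "s \<subseteq> ?A" using PA by blast
    from ball_card[OF _ this, of "\<lambda>c. real c \<le> ?d"]
    show "card {T\<in>Pow ?A. real (card (sd T s)) \<le> ?d} = B" unfolding B_def by simp
  qed
  also have "\<dots> = card P * B" by simp
  finally have h: "card (Pow ?A) \<le> card P * B" .
  then have "real (card (Pow ?A)) \<le> real (card P * B)" by (simp only: of_nat_le_iff)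
  then have h2: "real (card (Pow ?A)) \<le> real (card P) * real B" by (simp only: of_nat_mult)
  have "real B \<le> 8 powr ?d * (9/8) ^ n"
    using small_sets_card[of ?A ?d] unfolding B_def by simp
  then have "real (card P) * real B \<le> real (card P) * (8 powr ?d * (9/8) ^ n)"
    by (rule mult_left_mono) simp
  with h2 have "real (card (Pow ?A)) \<le> real (card P) * (8 powr ?d * (9/8) ^ n)" by linarith
  moreover have "real (card (Pow ?A)) = 2 ^ n" by (simp add: card_Pow)
  ultimately have "2 ^ n \<le> real (card P) * (8 powr ?d * (9/8) ^ n)" by simp
  moreover have "\<forall>T\<in>P. \<forall>U\<in>P. T \<noteq> U \<longrightarrow> real (card (sd T U)) > ?d" using P unfolding G_def by blast
  ultimately show ?thesis using PA by blast
qed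


lemma Theta_iff:
  "f \<in> Theta M \<phi> k A C \<longleftrightarrow> f \<in> L2 M \<and>
    (\<forall>j\<ge>1. \<bar>rearr (\<lambda>j. L2_inner M f (\<phi> j)) j\<bar> \<le> A * real j powr (-k)) \<and>
    (\<forall>J\<ge>1. (\<Sum>i. (L2_inner M f (\<phi> (i + J + 1)))\<^sup>2) \<le> C * real J powr (-2*k + 1))"
  unfolding Theta_def Let_def by (rule mem_Collect_eq)

lemma ThetaI:
  assumes "f \<in> L2 M"
    "\<And>j. j \<ge> 1 \<Longrightarrow> \<bar>rearr (\<lambda>j. L2_inner M f (\<phi> j)) j\<bar> \<le> A * real j powr (-k)"
    "\<And>J. J \<ge> 1 \<Longrightarrow> (\<Sum>i. (L2_inner M f (\<phi> (i + J + 1)))\<^sup>2) \<le> C * real J powr (-2*k + 1)"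
  shows "f \<in> Theta M \<phi> k A C"
  unfolding Theta_iff using assms by simp

lemma ThetaD:
  assumes "f \<in> Theta M \<phi> k A C"
  shows "f \<in> L2 M"
    "\<And>j. j \<ge> 1 \<Longrightarrow> \<bar>rearr (\<lambda>j. L2_inner M f (\<phi> j)) j\<bar> \<le> A * real j powr (-k)"
    "\<And>J. J \<ge> 1 \<Longrightarrow> (\<Sum>i. (L2_inner M f (\<phi> (i + J + 1)))\<^sup>2) \<le> C * real J powr (-2*k + 1)"
  using assms unfolding Theta_iff by simp_all


lemma rearr_bdd: "bdd_below {t. 0 \<le> t \<and> finite {i. i \<ge> 1 \<and> \<bar>\<theta> i\<bar> > t} \<and>
                        card {i. i \<ge> 1 \<and> \<bar>\<theta> i\<bar> > t} < j}"
  by (rule bdd_belowI[of _ 0]) simp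

lemma rearr_le:
  assumes "0 \<le> t" "finite {i. i \<ge> 1 \<and> \<bar>\<theta> i\<bar> > t}" "card {i. i \<ge> 1 \<and> \<bar>\<theta> i\<bar> > t} < j"
  shows "rearr \<theta> j \<le> t"
proof -
  have "t \<in> {t. 0 \<le> t \<and> finite {i. i \<ge> 1 \<and> \<bar>\<theta> i\<bar> > t} \<and>
                        card {i. i \<ge> 1 \<and> \<bar>\<theta> i\<bar> > t} < j}" using assms by simp
  then show ?thesis unfolding rearr_def by (rule cInf_lower[OF _ rearr_bdd])
qed

lemma rearr_nonneg:
  assumes "0 \<le> t" "finite {i. i \<ge> 1 \<and> \<bar>\<theta> i\<bar> > t}" "card {i. i \<ge> 1 \<and> \<bar>\<theta> i\<bar> > t} < j"
  shows "rearr \<theta> j \<ge> 0"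
proof -
  have "t \<in> {t. 0 \<le> t \<and> finite {i. i \<ge> 1 \<and> \<bar>\<theta> i\<bar> > t} \<and>
                        card {i. i \<ge> 1 \<and> \<bar>\<theta> i\<bar> > t} < j}" using assms by simp
  then have ne: "{t. 0 \<le> t \<and> finite {i. i \<ge> 1 \<and> \<bar>\<theta> i\<bar> > t} \<and>
                        card {i. i \<ge> 1 \<and> \<bar>\<theta> i\<bar> > t} < j} \<noteq> {}" by blast
  show ?thesis unfolding rearr_def by (rule cInf_greatest[OF ne]) simp
qed

lemma rearr_small:
  assumes "\<And>i. i \<ge> 1 \<Longrightarrow> \<bar>\<theta> i\<bar> \<le> \<delta>" "0 \<le> \<delta>" "finite T" "card T \<le> n"
    "\<And>i. i \<ge> 1 \<Longrightarrow> \<theta> i \<noteq> 0 \<Longrightarrow> i \<in> T" "j \<ge> 1"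
  shows "0 \<le> rearr \<theta> j" "rearr \<theta> j \<le> \<delta>" "j > n \<Longrightarrow> rearr \<theta> j \<le> 0"
proof -
  have e: "{i. i \<ge> 1 \<and> \<bar>\<theta> i\<bar> > \<delta>} = {}"
  proof -
    have "\<not> (i \<ge> 1 \<and> \<bar>\<theta> i\<bar> > \<delta>)" for i using assms(1)[of i] by linarith
    then show ?thesis by blast
  qed
  have f0: "finite {i. i \<ge> 1 \<and> \<bar>\<theta> i\<bar> > \<delta>}" "card {i. i \<ge> 1 \<and> \<bar>\<theta> i\<bar> > \<delta>} < j"
    unfolding e using assms(6) by simp_all
  show "0 \<le> rearr \<theta> j" by (rule rearr_nonneg[OF assms(2) f0])
  show "rearr \<theta> j \<le> \<delta>" by (rule rearr_le[OF assms(2) f0])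
  assume "j > n"
  have s: "{i. i \<ge> 1 \<and> \<bar>\<theta> i\<bar> > 0} \<subseteq> T"
  proof
    fix i assume "i \<in> {i. i \<ge> 1 \<and> \<bar>\<theta> i\<bar> > 0}"
    then have "i \<ge> 1" "\<theta> i \<noteq> 0" by auto
    then show "i \<in> T" by (rule assms(5))
  qed
  then have f: "finite {i. i \<ge> 1 \<and> \<bar>\<theta> i\<bar> > 0}" using assms(3) finite_subset by blast
  have "card {i. i \<ge> 1 \<and> \<bar>\<theta> i\<bar> > 0} \<le> card T" by (rule card_mono[OF assms(3) s])
  then have "card {i. i \<ge> 1 \<and> \<bar>\<theta> i\<bar> > 0} < j" using assms(4) \<open>j > n\<close> by linarith
  then show "rearr \<theta> j \<le> 0" by (rule rearr_le[OF order.refl f])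
qed

context
  fixes M :: "real measure" and \<phi> :: "nat \<Rightarrow> real \<Rightarrow> real" and A k C :: real
  assumes ONB: "orthonormal_basis_L2 M \<phi>" and Apos: "A > 0" and kpos: "k > 1/2" and Cpos: "C > 0"
begin

definition aa where "aa = min A (sqrt C)"
definition fT where "fT n T = (\<lambda>x. \<Sum>j\<in>{1..n}. (if j \<in> T then aa * real n powr (-k) else 0) * \<phi> j x)"

lemma aa_pos: "aa > 0" using Apos Cpos by (simp add: aa_def)
lemma aa_sq: "aa\<^sup>2 \<le> C"
proof -
  have "aa \<le> sqrt C" "0 \<le> aa" using aa_pos by (auto simp: aa_def)
  then have "aa\<^sup>2 \<le> (sqrt C)\<^sup>2" by (intro power_mono) auto
  then show ?thesis using Cpos by simp
qed

lemma fT_coef: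
  assumes "T \<subseteq> {1..n}" "i \<ge> 1"
  shows "L2_inner M (fT n T) (\<phi> i) = (if i \<in> T then aa * real n powr (-k) else 0)"
  unfolding fT_def using inner_expansion[OF ONB, of "{1..n}" i] assms by auto

lemma fT_L2: "fT n T \<in> L2 M"
  unfolding fT_def by (rule L2_sum) (use phi_L2[OF ONB] in auto)

lemma fT_dist:
  assumes "T \<subseteq> {1..n}" "U \<subseteq> {1..n}"
  shows "(\<integral>x. (fT n T x - fT n U x)\<^sup>2 \<partial>M) = (aa * real n powr (-k))\<^sup>2 * real (card (sd T U))"
proof -
  let ?d = "aa * real n powr (-k)"
  let ?c = "\<lambda>j. (if j \<in> T then ?d else 0) - (if j \<in> U then ?d else 0)"
  have "\<And>x. fT n T x - fT n U x = (\<Sum>j\<in>{1..n}. ?c j * \<phi> j x)"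
    unfolding fT_def by (simp add: sum_subtractf[symmetric] algebra_simps)
  then have "(\<integral>x. (fT n T x - fT n U x)\<^sup>2 \<partial>M) = (\<Sum>j\<in>{1..n}. (?c j)\<^sup>2)"
    using norm_expansion[OF ONB, of "{1..n}" ?c] by simp
  also have "\<dots> = (\<Sum>j\<in>{1..n}. if j \<in> sd T U then ?d\<^sup>2 else 0)"
    by (rule sum.cong) (auto simp: sd_def)
  also have "\<dots> = (\<Sum>j\<in>{1..n} \<inter> sd T U. ?d\<^sup>2)"
    by (rule sum.inter_restrict[symmetric]) simp
  also have "{1..n} \<inter> sd T U = sd T U" using assms by (auto simp: sd_def)
  finally show ?thesis by simp
qed

lemma fT_Theta:
  assumes "T \<subseteq> {1..n}" "n \<ge> 1"
  shows "fT n T \<in> Theta M \<phi> k A C"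
proof -
  let ?d = "aa * real n powr (-k)"
  define \<theta> where "\<theta> = (\<lambda>j. L2_inner M (fT n T) (\<phi> j))"
  have th: "\<And>i. i \<ge> 1 \<Longrightarrow> \<theta> i = (if i \<in> T then ?d else 0)"
    unfolding \<theta>_def using fT_coef assms by auto
  have dpos: "?d > 0" using aa_pos assms by auto
  have finT: "finite T" "card T \<le> n" using assms finite_subset[OF assms(1)] card_mono[OF _ assms(1)] by auto
  have a: "\<bar>rearr \<theta> j\<bar> \<le> A * real j powr (-k)" if j: "j \<ge> 1" for j
  proof -
    note R = rearr_small[of \<theta> ?d T n j]
    have h1: "\<And>i. i \<ge> 1 \<Longrightarrow> \<bar>\<theta> i\<bar> \<le> ?d" using th dpos by auto
    have h2: "i \<in> T" if "i \<ge> 1" "\<theta> i \<noteq> 0" for i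
      using th[OF that(1)] that(2) by (cases "i \<in> T") auto
    note R = R[OF h1 less_imp_le[OF dpos] finT h2 j]
    show ?thesis
    proof (cases "j \<le> n")
      case True
      have "real n powr (-k) \<le> real j powr (-k)"
        by (rule powr_mono2') (use True j kpos in auto)
      moreover have "aa \<le> A" by (simp add: aa_def)
      ultimately have "?d \<le> A * real j powr (-k)"
        using aa_pos by (intro mult_mono) simp_all
      moreover have "\<bar>rearr \<theta> j\<bar> \<le> ?d" using R(1,2) by (simp add: abs_of_nonneg)
      ultimately show ?thesis by linarith
    next
      case False
      then have "rearr \<theta> j = 0" using R(1,3) by simp
      moreover have "0 \<le> A * real j powr (-k)" using Apos by simp
      ultimately show ?thesis by simp
    qed
  qed
  have b: "(\<Sum>i. (\<theta> (i + J + 1))\<^sup>2) \<le> C * real J powr (-2*k + 1)" if J: "J \<ge> 1" for J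
  proof -
    let ?N = "{i. i + J + 1 \<in> T}"
    have Nsub: "?N \<subseteq> {..<n}" using assms by auto
    have finN: "finite ?N" using Nsub finite_subset by blast
    have "(\<Sum>i. (\<theta> (i + J + 1))\<^sup>2) = (\<Sum>i\<in>?N. (\<theta> (i + J + 1))\<^sup>2)"
      by (rule suminf_finite[OF finN]) (use th in auto)
    also have "\<dots> = (\<Sum>i\<in>?N. ?d\<^sup>2)" by (rule sum.cong) (use th in auto)
    also have "\<dots> = real (card ?N) * ?d\<^sup>2" by simp
    also have "\<dots> \<le> C * real J powr (-2*k + 1)"
    proof (cases "?N = {}")
      case True then show ?thesis using Cpos by simp
    next
      case False
      then obtain i where "i + J + 1 \<in> T" by auto
      then have Jn: "J \<le> n" using assms by auto
      have cN: "real (card ?N) \<le> real n" using card_mono[OF _ Nsub] by auto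
      have "?d\<^sup>2 = aa\<^sup>2 * (real n powr (-k) * real n powr (-k))"
        by (simp add: power2_eq_square)
      also have "real n powr (-k) * real n powr (-k) = real n powr (-2*k)"
        by (simp add: powr_add[symmetric])
      finally have d2: "?d\<^sup>2 = aa\<^sup>2 * real n powr (-2*k)" .
      then have "real (card ?N) * ?d\<^sup>2 \<le> real n * (aa\<^sup>2 * real n powr (-2*k))"
        unfolding d2 using cN by (intro mult_right_mono) auto
      also have "\<dots> = aa\<^sup>2 * real n powr (-2*k + 1)"
      proof -
        have "real n powr (-2*k + 1) = real n powr (-2*k) * real n powr 1" by (rule powr_add)
        also have "real n powr 1 = real n" using assms by simp
        finally show ?thesis by simp
      qed
      also have "\<dots> \<le> C * real J powr (-2*k + 1)"
      proof (rule mult_mono)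
        show "aa\<^sup>2 \<le> C" by (rule aa_sq)
        show "real n powr (- 2 * k + 1) \<le> real J powr (- 2 * k + 1)"
          by (rule powr_mono2') (use kpos J Jn in auto)
      qed (use Cpos in auto)
      finally show ?thesis .
    qed
    finally show ?thesis .
  qed
  show ?thesis by (rule ThetaI[OF fT_L2 a[unfolded \<theta>_def] b[unfolded \<theta>_def]])
qed

end


lemma weak_sum_bound:
  fixes x :: "nat \<Rightarrow> real" and a :: "nat \<Rightarrow> real" and g :: "real \<Rightarrow> real"
  assumes "finite I"
    and W: "\<And>j t. j \<ge> 1 \<Longrightarrow> t > a j \<Longrightarrow> card {i\<in>I. \<bar>x i\<bar> > t} < j"
    and mono: "\<And>u v. 0 \<le> u \<Longrightarrow> u \<le> v \<Longrightarrow> g u \<le> g v"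
  shows "(\<Sum>i\<in>I. g \<bar>x i\<bar>) \<le> (\<Sum>j=1..card I. g (a j))"
  using assms(1) W
proof (induction "card I" arbitrary: I)
  case 0
  then have "I = {}" by simp
  then show ?case by simp
next
  case (Suc m)
  note finI = Suc.prems(1)
  have Ine: "I \<noteq> {}" using Suc.hyps(2) by auto
  define v where "v = Min ((\<lambda>i. \<bar>x i\<bar>) ` I)"
  have "v \<in> (\<lambda>i. \<bar>x i\<bar>) ` I" unfolding v_def using finI Ine by (intro Min_in) auto
  then obtain i0 where i0: "i0 \<in> I" "\<bar>x i0\<bar> = v" by auto
  have vmin: "\<And>i. i \<in> I \<Longrightarrow> v \<le> \<bar>x i\<bar>" unfolding v_def using finI by (intro Min_le) auto
  have small: "\<bar>x i0\<bar> \<le> a (Suc m)"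
  proof (rule ccontr)
    assume "\<not> \<bar>x i0\<bar> \<le> a (Suc m)"
    then have lt: "a (Suc m) < \<bar>x i0\<bar>" by simp
    define t where "t = (\<bar>x i0\<bar> + a (Suc m)) / 2"
    have t1: "t > a (Suc m)" "t < \<bar>x i0\<bar>" using lt unfolding t_def by auto
    have "{i\<in>I. \<bar>x i\<bar> > t} = I" using vmin i0 t1 by force
    moreover have "card {i\<in>I. \<bar>x i\<bar> > t} < Suc m" by (rule Suc.prems(2)) (use t1 in auto)
    ultimately show False using Suc.hyps(2) by simp
  qed
  let ?I' = "I - {i0}"
  have cI': "m = card ?I'" using Suc.hyps(2) i0 finI by simp
  have W': "card {i\<in>?I'. \<bar>x i\<bar> > t} < j" if "j \<ge> 1" "t > a j" for j t
  proof -
    have "card {i\<in>?I'. \<bar>x i\<bar> > t} \<le> card {i\<in>I. \<bar>x i\<bar> > t}"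
      by (rule card_mono) (use finI in auto)
    also have "\<dots> < j" by (rule Suc.prems(2)[OF that])
    finally show ?thesis .
  qed
  have IH: "(\<Sum>i\<in>?I'. g \<bar>x i\<bar>) \<le> (\<Sum>j=1..card ?I'. g (a j))"
    by (rule Suc.hyps(1)[OF cI']) (use finI W' in auto)
  have "(\<Sum>i\<in>I. g \<bar>x i\<bar>) = g \<bar>x i0\<bar> + (\<Sum>i\<in>?I'. g \<bar>x i\<bar>)"
    using finI i0 by (simp add: sum.remove)
  also have "\<dots> \<le> g (a (Suc m)) + (\<Sum>j=1..m. g (a j))"
    using IH cI' mono[OF abs_ge_zero small] by simp
  also have "\<dots> = (\<Sum>j=1..Suc m. g (a j))" by simp
  finally show ?case using Suc.hyps(2) by simp
qed

lemma pow_le_exp_fact: "real n ^ n \<le> exp (real n) * fact n"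
proof (induction n)
  case 0 then show ?case by simp
next
  case (Suc n)
  show ?case
  proof (cases "n = 0")
    case True then show ?thesis by (simp add: exp_ge_add_one_self_aux[of 1, simplified] order_trans[OF _ exp_ge_add_one_self])
  next
    case False
    then have np: "n > 0" by simp
    have e: "(1 + 1 / real n) ^ n \<le> exp 1"
      using exp_ge_one_plus_x_over_n_power_n[of n 1] np by simp
    have "real (Suc n) ^ Suc n = real (Suc n) * (real n ^ n * (1 + 1 / real n) ^ n)"
    proof -
      have "real (Suc n) = real n * (1 + 1 / real n)" using np by (simp add: field_simps)
      then have "real (Suc n) ^ n = real n ^ n * (1 + 1 / real n) ^ n" by (simp add: power_mult_distrib)
      then show ?thesis by simp
    qed
    also have "\<dots> \<le> real (Suc n) * ((exp (real n) * fact n) * exp 1)"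
      by (intro mult_left_mono mult_mono Suc.IH e) auto
    also have "\<dots> = exp (real (Suc n)) * fact (Suc n)"
      by (simp add: exp_add[symmetric] algebra_simps)
    finally show ?thesis .
  qed
qed

lemma sum_ln_ratio: "(\<Sum>j=1..n. ln (real n / real j)) \<le> real n"
proof (cases "n = 0")
  case True then show ?thesis by simp
next
  case False
  have "(\<Sum>j=1..n. ln (real n / real j)) = (\<Sum>j=1..n. ln (real n) - ln (real j))"
    by (rule sum.cong) (auto simp: ln_div)
  also have "\<dots> = real n * ln (real n) - (\<Sum>j=1..n. ln (real j))"
    by (simp add: sum_subtractf)
  also have "(\<Sum>j=1..n. ln (real j)) = ln (fact n)"
  proof -
    have "(fact n :: real) = (\<Prod>j\<in>{1..n}. real j)" by (simp add: fact_prod)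
    moreover have "ln (\<Prod>j\<in>{1..n}. real j) = (\<Sum>j\<in>{1..n}. ln (real j))" by (rule ln_prod) auto
    ultimately show ?thesis by simp
  qed
  also have "real n * ln (real n) = ln (real n ^ n)"
    using False by (simp add: ln_realpow)
  also have "ln (real n ^ n) - ln (fact n) \<le> real n"
  proof -
    have "ln (real n ^ n) \<le> ln (exp (real n) * fact n)"
      using pow_le_exp_fact[of n] False by (subst ln_le_cancel_iff) auto
    also have "\<dots> = real n + ln (fact n)" by (simp add: ln_mult)
    finally show ?thesis by simp
  qed
  finally show ?thesis .
qed

lemma weight_sum_le: "(\<Sum>z\<in>{-int N..int N}. 1 / (1 + \<bar>real_of_int z\<bar>)\<^sup>2) \<le> 3 - 2 / (real N + 1)"
proof (induction N)
  case 0 then show ?case by simp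
next
  case (Suc N)
  have eq: "{-int (Suc N)..int (Suc N)} = insert (int (Suc N)) (insert (- int (Suc N)) {-int N..int N})"
    by auto
  have "(\<Sum>z\<in>{-int (Suc N)..int (Suc N)}. 1 / (1 + \<bar>real_of_int z\<bar>)\<^sup>2)
      = 2 / (real N + 2)\<^sup>2 + (\<Sum>z\<in>{-int N..int N}. 1 / (1 + \<bar>real_of_int z\<bar>)\<^sup>2)"
    unfolding eq by (simp add: add.commute)
  also have "\<dots> \<le> 2 / (real N + 2)\<^sup>2 + (3 - 2 / (real N + 1))" using Suc.IH by simp
  also have "\<dots> \<le> 3 - 2 / (real (Suc N) + 1)"
  proof -
    have "2 / (real N + 2)\<^sup>2 \<le> 2 / ((real N + 1) * (real N + 2))"
      by (rule divide_left_mono) (auto simp: power2_eq_square)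
    also have "\<dots> = 2 / (real N + 1) - 2 / (real N + 2)" by (simp add: field_simps)
    finally have h: "2 / (real N + 2)\<^sup>2 \<le> 2 / (real N + 1) - 2 / (real N + 2)" .
    have "real (Suc N) + 1 = real N + 2" by simp
    then show ?thesis using h by (simp only:)
  qed
  finally show ?case .
qed

lemma count_bound:
  fixes X :: "(nat \<Rightarrow> int) set" and I :: "nat set"
  assumes "finite I" "X \<subseteq> PiE I (\<lambda>_. {-int N..int N})" "E > 0"
    and B: "\<And>v. v \<in> X \<Longrightarrow> (\<Prod>j\<in>I. 1 + \<bar>real_of_int (v j)\<bar>) \<le> E"
  shows "real (card X) \<le> 3 ^ card I * E\<^sup>2"
proof -
  let ?w = "\<lambda>z::int. 1 / (1 + \<bar>real_of_int z\<bar>)\<^sup>2"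
  let ?P = "PiE I (\<lambda>_. {-int N..int N})"
  have finP: "finite ?P" using assms(1) by (intro finite_PiE) auto
  have finX: "finite X" using finite_subset[OF assms(2) finP] .
  have "real (card X) * (1 / E\<^sup>2) = (\<Sum>v\<in>X. 1 / E\<^sup>2)" by simp
  also have "\<dots> \<le> (\<Sum>v\<in>X. \<Prod>j\<in>I. ?w (v j))"
  proof (rule sum_mono)
    fix v assume v: "v \<in> X"
    have pp: "(\<Prod>j\<in>I. 1 + \<bar>real_of_int (v j)\<bar>) > 0" by (intro prod_pos) auto
    have "1 / E\<^sup>2 \<le> 1 / (\<Prod>j\<in>I. 1 + \<bar>real_of_int (v j)\<bar>)\<^sup>2"
      using B[OF v] pp by (intro divide_left_mono power_mono mult_pos_pos) auto
    also have "\<dots> = (\<Prod>j\<in>I. ?w (v j))"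
      by (simp add: prod_dividef power_divide prod_power_distrib[symmetric])
    finally show "1 / E\<^sup>2 \<le> (\<Prod>j\<in>I. ?w (v j))" .
  qed
  also have "\<dots> \<le> (\<Sum>v\<in>?P. \<Prod>j\<in>I. ?w (v j))"
    by (rule sum_mono2[OF finP assms(2)]) (auto intro: prod_nonneg)
  also have "\<dots> = (\<Prod>j\<in>I. \<Sum>z\<in>{-int N..int N}. ?w z)"
    by (rule prod_sum_PiE[symmetric]) (use assms(1) in auto)
  also have "\<dots> \<le> 3 ^ card I"
  proof (rule prod_le_power)
    fix j assume "j \<in> I"
    show "0 \<le> (\<Sum>z\<in>{-int N..int N}. ?w z) \<and> (\<Sum>z\<in>{-int N..int N}. ?w z) \<le> 3"
    proof
      show "0 \<le> (\<Sum>z\<in>{-int N..int N}. ?w z)" by (rule sum_nonneg) simp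
      have "2 / (real N + 1) \<ge> 0" by simp
      then show "(\<Sum>z\<in>{-int N..int N}. ?w z) \<le> 3" using weight_sum_le[of N] by linarith
    qed
  qed auto
  finally have "real (card X) * (1 / E\<^sup>2) \<le> 3 ^ card I" .
  then show ?thesis using assms(3) by (simp add: field_simps)
qed


lemma sum_shift_tail:
  fixes J p :: nat and u :: "nat \<Rightarrow> real"
  shows "(\<Sum>j=J+1..J+p. u j) = (\<Sum>i<p. u (i + J + 1))"
  by (induction p) (auto simp: add.commute add.left_commute)

context
  fixes M :: "real measure" and \<phi> :: "nat \<Rightarrow> real \<Rightarrow> real" and A k C :: real
  assumes ONB: "orthonormal_basis_L2 M \<phi>" and Apos: "A > 0" and kpos: "k > 1/2" and Cpos: "C > 0"
begin

lemma coef_diff: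
  assumes "f \<in> L2 M" "g \<in> L2 M" "j \<ge> 1"
  shows "L2_inner M (\<lambda>x. f x - g x) (\<phi> j) = L2_inner M f (\<phi> j) - L2_inner M g (\<phi> j)"
proof -
  have i1: "integrable M (\<lambda>x. f x * \<phi> j x)" "integrable M (\<lambda>x. g x * \<phi> j x)"
    using L2_mult_integrable phi_L2[OF ONB] assms by auto
  have "L2_inner M (\<lambda>x. f x - g x) (\<phi> j) = (\<integral>x. f x * \<phi> j x - g x * \<phi> j x \<partial>M)"
    by (simp add: L2_inner_def left_diff_distrib)
  also have "\<dots> = L2_inner M f (\<phi> j) - L2_inner M g (\<phi> j)"
    using i1 by (simp add: L2_inner_def)
  finally show ?thesis .
qed

lemma coef_bound:
  assumes "f \<in> L2 M" "i \<ge> 1"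
  shows "\<bar>L2_inner M f (\<phi> i)\<bar> \<le> sqrt (\<integral>x. (f x)\<^sup>2 \<partial>M)"
proof -
  have "(L2_inner M f (\<phi> i))\<^sup>2 \<le> (\<Sum>j=1..i. (L2_inner M f (\<phi> j))\<^sup>2)"
    by (rule member_le_sum[where f="\<lambda>j. (L2_inner M f (\<phi> j))\<^sup>2"]) (use assms in auto)
  also have "\<dots> \<le> (\<integral>x. (f x)\<^sup>2 \<partial>M)" by (rule bessel_le[OF ONB assms(1)])
  finally show ?thesis using real_le_rsqrt by (simp add: real_sqrt_abs[symmetric] del: real_sqrt_abs)
qed

lemma weak_from_Theta:
  assumes f: "f \<in> Theta M \<phi> k A C" and j: "j \<ge> 1" and t: "t > A * real j powr (-k)"
  shows "finite {i. i \<ge> 1 \<and> \<bar>L2_inner M f (\<phi> i)\<bar> > t}"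
        "card {i. i \<ge> 1 \<and> \<bar>L2_inner M f (\<phi> i)\<bar> > t} < j"
proof -
  define \<theta> where "\<theta> = (\<lambda>j. L2_inner M f (\<phi> j))"
  have fL: "f \<in> L2 M" using ThetaD(1)[OF f] .
  define S where "S = {t. 0 \<le> t \<and> finite {i. i \<ge> 1 \<and> \<bar>\<theta> i\<bar> > t} \<and>
                        card {i. i \<ge> 1 \<and> \<bar>\<theta> i\<bar> > t} < j}"
  define t0 where "t0 = sqrt (\<integral>x. (f x)\<^sup>2 \<partial>M)"
  have e0: "{i. i \<ge> 1 \<and> \<bar>\<theta> i\<bar> > t0} = {}"
  proof -
    have "\<not> (i \<ge> 1 \<and> \<bar>\<theta> i\<bar> > t0)" for i
      using coef_bound[OF fL, of i] unfolding \<theta>_def t0_def by linarith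
    then show ?thesis by blast
  qed
  have t0nn: "0 \<le> t0" unfolding t0_def by (simp add: Bochner_Integration.integral_nonneg)
  have "t0 \<in> S" unfolding S_def mem_Collect_eq e0 using t0nn j by simp
  then have Sne: "S \<noteq> {}" by blast
  have bdd: "bdd_below S" unfolding S_def by (rule rearr_bdd)
  have "rearr \<theta> j \<le> A * real j powr (-k)"
    using ThetaD(2)[OF f j] unfolding \<theta>_def by linarith
  then have "Inf S < t" using t unfolding rearr_def S_def by linarith
  then obtain s where s: "s \<in> S" "s < t" using cInf_less_iff[OF Sne bdd] by blast
  have sub: "{i. i \<ge> 1 \<and> \<bar>\<theta> i\<bar> > t} \<subseteq> {i. i \<ge> 1 \<and> \<bar>\<theta> i\<bar> > s}" using s(2) by auto
  have fs: "finite {i. i \<ge> 1 \<and> \<bar>\<theta> i\<bar> > s}" "card {i. i \<ge> 1 \<and> \<bar>\<theta> i\<bar> > s} < j"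
    using s(1) unfolding S_def by auto
  show "finite {i. i \<ge> 1 \<and> \<bar>L2_inner M f (\<phi> i)\<bar> > t}"
    using finite_subset[OF sub fs(1)] unfolding \<theta>_def .
  have "card {i. i \<ge> 1 \<and> \<bar>\<theta> i\<bar> > t} \<le> card {i. i \<ge> 1 \<and> \<bar>\<theta> i\<bar> > s}"
    by (rule card_mono[OF fs(1) sub])
  then show "card {i. i \<ge> 1 \<and> \<bar>L2_inner M f (\<phi> i)\<bar> > t} < j" using fs(2) unfolding \<theta>_def by linarith
qed

lemma tail_summable:
  assumes "f \<in> L2 M"
  shows "summable (\<lambda>i. (L2_inner M f (\<phi> (i + J + 1)))\<^sup>2)"
proof (rule summableI_nonneg_bounded)
  fix n
  have "(\<Sum>i<n. (L2_inner M f (\<phi> (i + J + 1)))\<^sup>2) = (\<Sum>j=J+1..J+n. (L2_inner M f (\<phi> j))\<^sup>2)"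
    by (rule sum_shift_tail[symmetric])
  also have "\<dots> \<le> (\<Sum>j=1..J+n. (L2_inner M f (\<phi> j))\<^sup>2)"
    by (rule sum_mono2) auto
  also have "\<dots> \<le> (\<integral>x. (f x)\<^sup>2 \<partial>M)" by (rule bessel_le[OF ONB assms])
  finally show "(\<Sum>i<n. (L2_inner M f (\<phi> (i + J + 1)))\<^sup>2) \<le> (\<integral>x. (f x)\<^sup>2 \<partial>M)" .
qed simp

lemma tail_partial_le:
  assumes "f \<in> L2 M"
  shows "(\<Sum>j=J+1..J+p. (L2_inner M f (\<phi> j))\<^sup>2) \<le> (\<Sum>i. (L2_inner M f (\<phi> (i + J + 1)))\<^sup>2)"
  unfolding sum_shift_tail by (rule sum_le_suminf[OF tail_summable[OF assms]]) auto

lemma dist_bound: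
  assumes f: "f \<in> Theta M \<phi> k A C" and g: "g \<in> Theta M \<phi> k A C" and J: "J \<ge> 1"
  shows "(\<integral>x. (f x - g x)\<^sup>2 \<partial>M) \<le> (\<Sum>j=1..J. (L2_inner M f (\<phi> j) - L2_inner M g (\<phi> j))\<^sup>2)
            + 4 * (C * real J powr (-2*k + 1))"
proof -
  have fL: "f \<in> L2 M" and gL: "g \<in> L2 M" using ThetaD(1) f g by auto
  define h where "h = (\<lambda>x. f x - g x)"
  have hL: "h \<in> L2 M" unfolding h_def by (rule L2_diff[OF fL gL])
  have hc: "\<And>j. j \<ge> 1 \<Longrightarrow> L2_inner M h (\<phi> j) = L2_inner M f (\<phi> j) - L2_inner M g (\<phi> j)"
    unfolding h_def by (rule coef_diff[OF fL gL])
  define P where "P = (\<lambda>n. \<Sum>j=1..n. (L2_inner M h (\<phi> j))\<^sup>2)"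
  have lim: "P \<longlonglongrightarrow> (\<integral>x. (h x)\<^sup>2 \<partial>M)" unfolding P_def by (rule parseval_lim[OF ONB hL])
  define tf where "tf = (\<Sum>i. (L2_inner M f (\<phi> (i + J + 1)))\<^sup>2)"
  define tg where "tg = (\<Sum>i. (L2_inner M g (\<phi> (i + J + 1)))\<^sup>2)"
  have tf: "tf \<le> C * real J powr (-2*k + 1)" unfolding tf_def by (rule ThetaD(3)[OF f J])
  have tg: "tg \<le> C * real J powr (-2*k + 1)" unfolding tg_def by (rule ThetaD(3)[OF g J])
  have bnd: "P n \<le> P J + 2 * tf + 2 * tg" if "n \<ge> J" for n
  proof -
    obtain p where n: "n = J + p" using \<open>n \<ge> J\<close> le_Suc_ex by blast
    have "P n = P J + (\<Sum>j=J+1..J+p. (L2_inner M h (\<phi> j))\<^sup>2)"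
      unfolding P_def n by (rule sum.ub_add_nat) simp
    also have "(\<Sum>j=J+1..J+p. (L2_inner M h (\<phi> j))\<^sup>2)
        \<le> (\<Sum>j=J+1..J+p. 2 * (L2_inner M f (\<phi> j))\<^sup>2 + 2 * (L2_inner M g (\<phi> j))\<^sup>2)"
    proof (rule sum_mono)
      fix j assume "j \<in> {J+1..J+p}"
      then have "j \<ge> 1" by simp
      then have "L2_inner M h (\<phi> j) = L2_inner M f (\<phi> j) - L2_inner M g (\<phi> j)" by (rule hc)
      moreover have "(a - b)\<^sup>2 \<le> 2 * a\<^sup>2 + 2 * b\<^sup>2" for a b :: real
      proof -
        have "(a - b)\<^sup>2 + (a + b)\<^sup>2 = 2 * a\<^sup>2 + 2 * b\<^sup>2" by (simp add: power2_eq_square algebra_simps)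
        moreover have "0 \<le> (a + b)\<^sup>2" by simp
        ultimately show ?thesis by linarith
      qed
      ultimately show "(L2_inner M h (\<phi> j))\<^sup>2 \<le> 2 * (L2_inner M f (\<phi> j))\<^sup>2 + 2 * (L2_inner M g (\<phi> j))\<^sup>2"
        by simp
    qed
    also have "\<dots> = 2 * (\<Sum>j=J+1..J+p. (L2_inner M f (\<phi> j))\<^sup>2) + 2 * (\<Sum>j=J+1..J+p. (L2_inner M g (\<phi> j))\<^sup>2)"
      by (simp add: sum.distrib sum_distrib_left)
    also have "\<dots> \<le> 2 * tf + 2 * tg"
      using tail_partial_le[OF fL, of J p] tail_partial_le[OF gL, of J p] unfolding tf_def tg_def by linarith
    finally show ?thesis by linarith
  qed
  have "(\<integral>x. (h x)\<^sup>2 \<partial>M) \<le> P J + 2 * tf + 2 * tg"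
    by (rule LIMSEQ_le_const2[OF lim]) (use bnd in blast)
  also have "P J = (\<Sum>j=1..J. (L2_inner M f (\<phi> j) - L2_inner M g (\<phi> j))\<^sup>2)"
    unfolding P_def by (rule sum.cong) (auto simp: hc)
  finally show ?thesis using tf tg unfolding h_def by linarith
qed

end


lemma floor_eq_close:
  fixes x y :: real
  assumes "\<lfloor>x\<rfloor> = \<lfloor>y\<rfloor>"
  shows "\<bar>x - y\<bar> < 1"
proof -
  have "real_of_int \<lfloor>x\<rfloor> \<le> x" "x < real_of_int \<lfloor>x\<rfloor> + 1" by linarith+
  moreover have "real_of_int \<lfloor>y\<rfloor> \<le> y" "y < real_of_int \<lfloor>y\<rfloor> + 1" by linarith+
  ultimately show ?thesis using assms by linarith
qed

lemma abs_floor_le: "\<bar>real_of_int \<lfloor>y\<rfloor>\<bar> \<le> \<bar>y\<bar> + 1"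
proof -
  have "real_of_int \<lfloor>y\<rfloor> \<le> y" "y < real_of_int \<lfloor>y\<rfloor> + 1" by linarith+
  then show ?thesis by linarith
qed

lemma factor_le_prod:
  fixes x :: "nat \<Rightarrow> real"
  assumes "finite I" "j \<in> I" "\<And>i. i \<in> I \<Longrightarrow> x i \<ge> 1"
  shows "x j \<le> (\<Prod>i\<in>I. x i)"
proof -
  have "(\<Prod>i\<in>I. x i) = x j * (\<Prod>i\<in>I - {j}. x i)" using assms by (simp add: prod.remove)
  moreover have "(\<Prod>i\<in>I - {j}. x i) \<ge> 1" by (rule prod_ge_1) (use assms in auto)
  moreover have "x j \<ge> 0" using assms(3)[OF assms(2)] by simp
  ultimately have "x j * 1 \<le> x j * (\<Prod>i\<in>I - {j}. x i)" by (intro mult_left_mono) auto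
  then show ?thesis using \<open>(\<Prod>i\<in>I. x i) = x j * (\<Prod>i\<in>I - {j}. x i)\<close> by simp
qed

context
  fixes M :: "real measure" and \<phi> :: "nat \<Rightarrow> real \<Rightarrow> real" and A k C :: real
  assumes ONB: "orthonormal_basis_L2 M \<phi>" and Apos: "A > 0" and kpos: "k > 1/2" and Cpos: "C > 0"
begin

definition dd :: "nat \<Rightarrow> real" where "dd J = 2 * sqrt C * real J powr (-k)"
definition LL :: "nat \<Rightarrow> real" where "LL J = (\<Sum>j=1..J. ln (2 + A * real j powr (-k) / dd J))"

lemma upper_card:
  assumes J: "J \<ge> 1" and eps: "\<epsilon> > 0" "8 * (C * real J powr (-2*k + 1)) \<le> \<epsilon>\<^sup>2"
    and S: "finite S" "S \<subseteq> Theta M \<phi> k A C"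
    and pack: "\<forall>f\<in>S. \<forall>g\<in>S. f \<noteq> g \<longrightarrow> L2_dist M f g > \<epsilon>"
  shows "real (card S) \<le> 3 ^ J * (exp (LL J))\<^sup>2"
proof -
  define \<delta> where "\<delta> = dd J"
  have dpos: "\<delta> > 0" unfolding \<delta>_def dd_def using Cpos J by simp
  define q where "q = (\<lambda>f. \<lambda>j. if j \<in> {1..J} then \<lfloor>L2_inner M f (\<phi> j) / \<delta>\<rfloor> else undefined)"
  have Jd: "real J * \<delta>\<^sup>2 = 4 * (C * real J powr (-2*k + 1))"
  proof -
    have "\<delta>\<^sup>2 = 4 * C * (real J powr (-k) * real J powr (-k))"
      unfolding \<delta>_def dd_def using Cpos by (simp add: power2_eq_square)
    also have "real J powr (-k) * real J powr (-k) = real J powr (-2*k)" by (simp add: powr_add[symmetric])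
    finally have h: "real J * \<delta>\<^sup>2 = 4 * C * (real J powr (-2*k) * real J)" by simp
    have p1: "real J powr (-2*k + 1) = real J powr (-2*k) * real J powr 1" by (rule powr_add)
    have p2: "real J powr 1 = real J" using J by simp
    show ?thesis unfolding h p1 p2 by simp
  qed
  have inj: "inj_on q S"
  proof (rule inj_onI, rule ccontr)
    fix f g assume f: "f \<in> S" and g: "g \<in> S" and qe: "q f = q g" and ne: "f \<noteq> g"
    have fT: "f \<in> Theta M \<phi> k A C" and gT: "g \<in> Theta M \<phi> k A C" using f g S by auto
    have close: "(L2_inner M f (\<phi> j) - L2_inner M g (\<phi> j))\<^sup>2 \<le> \<delta>\<^sup>2" if j: "j \<in> {1..J}" for j
    proof -
      have "\<lfloor>L2_inner M f (\<phi> j) / \<delta>\<rfloor> = \<lfloor>L2_inner M g (\<phi> j) / \<delta>\<rfloor>"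
        using fun_cong[OF qe, of j] j unfolding q_def by simp
      then have "\<bar>L2_inner M f (\<phi> j) / \<delta> - L2_inner M g (\<phi> j) / \<delta>\<bar> < 1" by (rule floor_eq_close)
      then have "\<bar>L2_inner M f (\<phi> j) - L2_inner M g (\<phi> j)\<bar> < \<delta>"
        using dpos by (simp add: diff_divide_distrib[symmetric] abs_divide divide_less_eq)
      then have "\<bar>L2_inner M f (\<phi> j) - L2_inner M g (\<phi> j)\<bar> \<le> \<bar>\<delta>\<bar>" using dpos by simp
      then show ?thesis by (simp only: abs_le_square_iff)
    qed
    have "(\<Sum>j=1..J. (L2_inner M f (\<phi> j) - L2_inner M g (\<phi> j))\<^sup>2) \<le> (\<Sum>j=1..J. \<delta>\<^sup>2)"
      by (rule sum_mono) (rule close)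
    also have "\<dots> = real J * \<delta>\<^sup>2" by simp
    finally have s1: "(\<Sum>j=1..J. (L2_inner M f (\<phi> j) - L2_inner M g (\<phi> j))\<^sup>2) \<le> 4 * (C * real J powr (-2*k + 1))"
      using Jd by simp
    have "(\<integral>x. (f x - g x)\<^sup>2 \<partial>M) \<le> \<epsilon>\<^sup>2"
      using dist_bound[OF ONB Apos kpos Cpos fT gT J] s1 eps(2) by linarith
    then have "sqrt (\<integral>x. (f x - g x)\<^sup>2 \<partial>M) \<le> sqrt (\<epsilon>\<^sup>2)" by (rule real_sqrt_le_mono)
    also have "sqrt (\<epsilon>\<^sup>2) = \<epsilon>" using eps(1) by simp
    finally have le: "L2_dist M f g \<le> \<epsilon>" unfolding L2_dist_def .
    have "L2_dist M f g > \<epsilon>" using pack f g ne by blast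
    then show False using le by linarith
  qed
  define E where "E = exp (LL J)"
  have Epos: "E > 0" unfolding E_def by simp
  have prodb: "(\<Prod>j\<in>{1..J}. 1 + \<bar>real_of_int (q f j)\<bar>) \<le> E" if f: "f \<in> S" for f
  proof -
    have fT: "f \<in> Theta M \<phi> k A C" using f S by auto
    define \<theta> where "\<theta> = (\<lambda>j. L2_inner M f (\<phi> j))"
    have pos: "(\<Prod>j\<in>{1..J}. 1 + \<bar>real_of_int (q f j)\<bar>) > 0" by (intro prod_pos) auto
    have "ln (\<Prod>j\<in>{1..J}. 1 + \<bar>real_of_int (q f j)\<bar>) = (\<Sum>j\<in>{1..J}. ln (1 + \<bar>real_of_int (q f j)\<bar>))"
      by (rule ln_prod) auto
    also have "\<dots> \<le> (\<Sum>j\<in>{1..J}. ln (2 + \<bar>\<theta> j\<bar> / \<delta>))"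
    proof (rule sum_mono)
      fix j assume j: "j \<in> {1..J}"
      have "\<bar>real_of_int (q f j)\<bar> \<le> \<bar>\<theta> j / \<delta>\<bar> + 1"
        using j abs_floor_le[of "\<theta> j / \<delta>"] unfolding q_def \<theta>_def by simp
      also have "\<bar>\<theta> j / \<delta>\<bar> = \<bar>\<theta> j\<bar> / \<delta>" using dpos by (simp add: abs_divide)
      finally show "ln (1 + \<bar>real_of_int (q f j)\<bar>) \<le> ln (2 + \<bar>\<theta> j\<bar> / \<delta>)"
        by (subst ln_le_cancel_iff) auto
    qed
    also have "\<dots> \<le> (\<Sum>j=1..card {1..J}. ln (2 + A * real j powr (-k) / \<delta>))"
    proof (rule weak_sum_bound[where x=\<theta> and a="\<lambda>j. A * real j powr (-k)" and g="\<lambda>u. ln (2 + u / \<delta>)"])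
      fix j t assume j: "j \<ge> 1" and t: "t > A * real j powr (-k)"
      have "card {i\<in>{1..J}. \<bar>\<theta> i\<bar> > t} \<le> card {i. i \<ge> 1 \<and> \<bar>\<theta> i\<bar> > t}"
        by (rule card_mono) (use weak_from_Theta(1)[OF ONB Apos kpos Cpos fT j t] in \<open>auto simp: \<theta>_def\<close>)
      also have "\<dots> < j" using weak_from_Theta(2)[OF ONB Apos kpos Cpos fT j t] unfolding \<theta>_def .
      finally show "card {i\<in>{1..J}. \<bar>\<theta> i\<bar> > t} < j" .
    next
      fix u v :: real assume "0 \<le> u" "u \<le> v"
      then show "ln (2 + u / \<delta>) \<le> ln (2 + v / \<delta>)"
        using dpos by (subst ln_le_cancel_iff) (auto simp: divide_right_mono add_pos_nonneg)
    qed simp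
    also have "\<dots> = LL J" unfolding LL_def \<delta>_def by simp
    finally have lnb: "ln (\<Prod>j\<in>{1..J}. 1 + \<bar>real_of_int (q f j)\<bar>) \<le> LL J" .
    have "(\<Prod>j\<in>{1..J}. 1 + \<bar>real_of_int (q f j)\<bar>) = exp (ln (\<Prod>j\<in>{1..J}. 1 + \<bar>real_of_int (q f j)\<bar>))"
      using pos by (simp only: exp_ln)
    also have "\<dots> \<le> exp (LL J)" using lnb by (simp only: exp_le_cancel_iff)
    finally show ?thesis unfolding E_def .
  qed
  define N where "N = nat \<lceil>E\<rceil>"
  have qP: "q ` S \<subseteq> PiE {1..J} (\<lambda>_. {-int N..int N})"
  proof
    fix v assume "v \<in> q ` S"
    then obtain f where f: "f \<in> S" and v: "v = q f" by blast
    show "v \<in> PiE {1..J} (\<lambda>_. {-int N..int N})"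
    proof (rule PiE_I)
      fix j assume j: "j \<in> {1..J}"
      have "1 + \<bar>real_of_int (q f j)\<bar> \<le> (\<Prod>j\<in>{1..J}. 1 + \<bar>real_of_int (q f j)\<bar>)"
        by (rule factor_le_prod[OF _ j]) auto
      also have "\<dots> \<le> E" by (rule prodb[OF f])
      finally have "\<bar>real_of_int (q f j)\<bar> \<le> real N" unfolding N_def by linarith
      then have "\<bar>q f j\<bar> \<le> int N" by linarith
      then show "v j \<in> {-int N..int N}" unfolding v by auto
    next
      fix j assume jn: "j \<notin> {1..J}"
      show "v j = undefined" unfolding v q_def using jn by (simp only: if_False)
    qed
  qed
  have "real (card (q ` S)) \<le> 3 ^ card {1..J} * E\<^sup>2"
    by (rule count_bound[OF _ qP Epos]) (use prodb in auto)
  moreover have "card (q ` S) = card S" by (rule card_image[OF inj])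
  ultimately show ?thesis unfolding E_def by simp
qed

lemma LL_bound:
  assumes J: "J \<ge> 1"
  shows "LL J \<le> real J * (ln (2 + A / (2 * sqrt C)) + k)"
proof -
  define B where "B = A / (2 * sqrt C)"
  have Bpos: "B > 0" unfolding B_def using Apos Cpos by simp
  have tm: "ln (2 + A * real j powr (-k) / dd J) \<le> ln (2 + B) + k * ln (real J / real j)"
    if j: "j \<in> {1..J}" for j
  proof -
    have jp: "real j > 0" and jJ: "real j \<le> real J" using j by auto
    define r where "r = (real J / real j) powr k"
    have r1: "r \<ge> 1" unfolding r_def using jp jJ kpos by (intro ge_one_powr_ge_zero) auto
    have "A * real j powr (-k) / dd J = B * (real j powr (-k) / real J powr (-k))"
      unfolding dd_def B_def by (simp add: field_simps)
    also have "real j powr (-k) / real J powr (-k) = r"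
      unfolding r_def using jp J by (simp add: powr_minus powr_divide field_simps)
    finally have e: "A * real j powr (-k) / dd J = B * r" .
    have "2 + B * r \<le> (2 + B) * r" using r1 Bpos by (simp add: algebra_simps)
    moreover have "0 < 2 + B * r" using Bpos r1 by (simp add: add_pos_nonneg)
    ultimately have "ln (2 + B * r) \<le> ln ((2 + B) * r)" using Bpos r1 by (subst ln_le_cancel_iff) auto
    also have "\<dots> = ln (2 + B) + ln r" using Bpos r1 by (simp add: ln_mult)
    also have "ln r = k * ln (real J / real j)" unfolding r_def using jp J by (simp add: ln_powr)
    finally show ?thesis unfolding e .
  qed
  have "LL J \<le> (\<Sum>j=1..J. ln (2 + B) + k * ln (real J / real j))"
    unfolding LL_def by (rule sum_mono) (rule tm)
  also have "\<dots> = real J * ln (2 + B) + k * (\<Sum>j=1..J. ln (real J / real j))"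
    by (simp add: sum.distrib sum_distrib_left)
  also have "\<dots> \<le> real J * ln (2 + B) + k * real J"
    using sum_ln_ratio[of J] kpos by (intro add_left_mono mult_left_mono) auto
  finally show ?thesis unfolding B_def by (simp add: algebra_simps)
qed

end


lemma powr_inv_exp:
  fixes b p e :: real
  assumes "b > 0" "p * e = 1"
  shows "(b powr p) powr e = b"
  using assms by (simp add: powr_powr)

lemma eps_pow:
  fixes c \<epsilon> p :: real
  assumes "c > 0" "\<epsilon> > 0"
  shows "(c / \<epsilon>\<^sup>2) powr p = c powr p * \<epsilon> powr (-2 * p)"
proof -
  have h2: "\<epsilon> powr 2 = \<epsilon>\<^sup>2" using assms by (simp add: powr_numeral)
  have h1: "(\<epsilon> powr 2) powr p = \<epsilon> powr (2 * p)" by (simp only: powr_powr)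
  have "(\<epsilon>\<^sup>2) powr p = \<epsilon> powr (2 * p)" using h1 unfolding h2 .
  moreover have "(c / \<epsilon>\<^sup>2) powr p = c powr p / (\<epsilon>\<^sup>2) powr p" using assms by (simp add: powr_divide)
  moreover have "\<epsilon> powr (-2 * p) = inverse (\<epsilon> powr (2 * p))" using assms by (simp add: powr_minus[symmetric])
  ultimately show ?thesis by (simp add: divide_inverse)
qed

lemma choose_J:
  fixes k C \<epsilon> :: real
  assumes k: "k > 1/2" and C: "C > 0" and e: "\<epsilon> > 0" "\<epsilon>\<^sup>2 \<le> 8 * C"
  defines "J \<equiv> nat \<lceil>(8 * C / \<epsilon>\<^sup>2) powr (1 / (2*k - 1))\<rceil>"
  shows "J \<ge> 1" "8 * (C * real J powr (-2*k + 1)) \<le> \<epsilon>\<^sup>2"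
        "real J \<le> 2 * ((8 * C) powr (1 / (2*k - 1)) * \<epsilon> powr (-2 / (2*k - 1)))"
proof -
  define p where "p = 1 / (2*k - 1)"
  define b where "b = 8 * C / \<epsilon>\<^sup>2"
  define y where "y = b powr p"
  have pp: "p > 0" unfolding p_def using k by simp
  have b1: "b \<ge> 1" unfolding b_def using e C by (simp add: field_simps)
  have y1: "y \<ge> 1" unfolding y_def using b1 pp by (intro ge_one_powr_ge_zero) auto
  have Jeq: "real J = real_of_int \<lceil>y\<rceil>" unfolding J_def y_def b_def p_def using y1 
    by (simp add: y_def b_def p_def)
  have Jy: "real J \<ge> y" unfolding Jeq by (rule le_of_int_ceiling)
  then show J1: "J \<ge> 1" using y1 by linarith
  have Jpos: "real J > 0" using J1 by simp
  have "y powr (2*k - 1) = b" unfolding y_def using b1 k by (intro powr_inv_exp) (auto simp: p_def)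
  moreover have "y powr (2*k - 1) \<le> real J powr (2*k - 1)" using Jy y1 k by (intro powr_mono2) auto
  ultimately have bJ: "b \<le> real J powr (2*k - 1)" by simp
  have "real J powr (-2*k + 1) = inverse (real J powr (2*k - 1))"
    using Jpos by (simp add: powr_minus[symmetric])
  also have "\<dots> \<le> inverse b" using bJ b1 by (intro le_imp_inverse_le) auto
  also have "inverse b = \<epsilon>\<^sup>2 / (8 * C)" unfolding b_def by simp
  finally have "real J powr (-2*k + 1) \<le> \<epsilon>\<^sup>2 / (8 * C)" .
  then show "8 * (C * real J powr (-2*k + 1)) \<le> \<epsilon>\<^sup>2" using C by (simp add: field_simps)
  have "real J \<le> y + 1" unfolding Jeq by (rule of_int_ceiling_le_add_one)
  also have "\<dots> \<le> 2 * y" using y1 by simp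
  also have "y = (8 * C) powr p * \<epsilon> powr (-2 * p)" unfolding y_def b_def using C e by (intro eps_pow) auto
  also have "-2 * p = -2 / (2*k - 1)" unfolding p_def by simp
  finally show "real J \<le> 2 * ((8 * C) powr (1 / (2*k - 1)) * \<epsilon> powr (-2 / (2*k - 1)))" unfolding p_def .
qed

lemma choose_n:
  fixes k a \<epsilon> :: real
  assumes k: "k > 1/2" and a: "a > 0" and e: "\<epsilon> > 0" "\<epsilon>\<^sup>2 * (8 * 2 powr (2*k - 1)) \<le> a\<^sup>2"
  defines "n \<equiv> nat \<lfloor>(a\<^sup>2 / 8 / \<epsilon>\<^sup>2) powr (1 / (2*k - 1))\<rfloor>"
  shows "n \<ge> 1" "8 * \<epsilon>\<^sup>2 \<le> a\<^sup>2 * real n powr (1 - 2*k)"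
        "real n \<ge> (1/2) * ((a\<^sup>2 / 8) powr (1 / (2*k - 1)) * \<epsilon> powr (-2 / (2*k - 1)))"
proof -
  define p where "p = 1 / (2*k - 1)"
  define b where "b = a\<^sup>2 / 8 / \<epsilon>\<^sup>2"
  define z where "z = b powr p"
  have pp: "p > 0" unfolding p_def using k by simp
  have bpos: "b > 0" unfolding b_def using a e by simp
  have b2: "b \<ge> 2 powr (2*k - 1)" unfolding b_def using e by (simp add: field_simps)
  have "z \<ge> (2 powr (2*k - 1)) powr p" unfolding z_def using b2 pp by (intro powr_mono2) auto
  also have "(2 powr (2*k - 1)) powr p = 2" using k by (intro powr_inv_exp) (auto simp: p_def)
  finally have z2: "z \<ge> 2" .
  have neq: "real n = real_of_int \<lfloor>z\<rfloor>" unfolding n_def z_def b_def p_def using z2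
    by (simp add: z_def b_def p_def)
  have nz: "real n \<le> z" "real n > z - 1" unfolding neq by linarith+
  show n1: "n \<ge> 1" using nz z2 by linarith
  have npos: "real n > 0" using n1 by simp
  have "real n powr (2*k - 1) \<le> z powr (2*k - 1)" using nz npos k by (intro powr_mono2) auto
  also have "z powr (2*k - 1) = b" unfolding z_def using bpos k by (intro powr_inv_exp) (auto simp: p_def)
  finally have nb: "real n powr (2*k - 1) \<le> b" .
  have "real n powr (1 - 2*k) = inverse (real n powr (2*k - 1))"
    using npos by (simp add: powr_minus[symmetric])
  also have "\<dots> \<ge> inverse b" using nb npos by (intro le_imp_inverse_le) auto
  finally have "inverse b \<le> real n powr (1 - 2*k)" .
  moreover have "inverse b = 8 * \<epsilon>\<^sup>2 / a\<^sup>2" unfolding b_def by simp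
  ultimately have "8 * \<epsilon>\<^sup>2 / a\<^sup>2 \<le> real n powr (1 - 2*k)" by simp
  then show "8 * \<epsilon>\<^sup>2 \<le> a\<^sup>2 * real n powr (1 - 2*k)" using a by (simp add: field_simps)
  have "z / 2 \<le> real n" using nz z2 by linarith
  moreover have "z = (a\<^sup>2 / 8) powr p * \<epsilon> powr (-2 * p)" unfolding z_def b_def using a e by (intro eps_pow) auto
  moreover have "-2 * p = -2 / (2*k - 1)" unfolding p_def by simp
  ultimately show "real n \<ge> (1/2) * ((a\<^sup>2 / 8) powr (1 / (2*k - 1)) * \<epsilon> powr (-2 / (2*k - 1)))"
    unfolding p_def by simp
qed

lemma kappa_pos: "ln 2 - ln 8 / 8 - ln (9/8) > (0::real)"
proof -
  have a1: "ln ((2::real)^8) = 8 * ln 2" using ln_realpow[of "2::real" 8] by (simp only: of_nat_numeral)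
  have a2: "ln ((9/8::real)^8) = 8 * ln (9/8)" using ln_realpow[of "9/8::real" 8] by (simp only: of_nat_numeral)
  have a3: "ln ((2::real)^8 / 8) = ln ((2::real)^8) - ln 8" by (rule ln_divide_pos) simp_all
  have a4: "ln ((2::real)^8 / 8 / (9/8)^8) = ln ((2::real)^8 / 8) - ln ((9/8)^8)" by (rule ln_divide_pos) simp_all
  have "(9/8::real)^8 = 43046721 / 16777216" by (simp add: power_divide)
  then have "(2::real)^8 / 8 / (9/8)^8 > 1" by simp
  then have a5: "ln ((2::real)^8 / 8 / (9/8)^8) > 0" by simp
  show ?thesis using a1 a2 a3 a4 a5 by linarith
qed


lemma powr_sq_mult:
  fixes a n k :: real
  assumes "n > 0"
  shows "(a * n powr (-k))\<^sup>2 * n = a\<^sup>2 * n powr (1 - 2*k)"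
proof -
  have e: "1 - 2*k = (-k) + (-k) + 1" by simp
  have "n powr (1 - 2*k) = n powr (-k) * n powr (-k) * n powr 1" unfolding e by (simp only: powr_add)
  also have "n powr 1 = n" using assms by simp
  finally have h: "n powr (1 - 2*k) = n powr (-k) * n powr (-k) * n" .
  show ?thesis unfolding h by (simp add: power2_eq_square)
qed

lemma card_floor: "real c \<le> R \<Longrightarrow> c \<le> nat \<lfloor>R\<rfloor>"
proof -
  assume h: "real c \<le> R"
  have "real_of_int (int c) \<le> R" using h by simp
  then have "int c \<le> \<lfloor>R\<rfloor>" by (simp only: le_floor_iff)
  then have "nat (int c) \<le> nat \<lfloor>R\<rfloor>" by (rule nat_mono)
  then show ?thesis by simp
qed

theorem theorem1:
  fixes M :: "real measure" and \<phi> :: "nat \<Rightarrow> real \<Rightarrow> real" and A k C :: real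
  assumes "measure_on_unit_interval M"
    and "orthonormal_basis_L2 M \<phi>"
    and "A > 0" and "k > 1/2" and "C > 0"
  shows "\<exists>c1 c2 \<epsilon>0. 0 < c1 \<and> c1 \<le> c2 \<and> 0 < \<epsilon>0 \<and>
           (\<forall>\<epsilon>. 0 < \<epsilon> \<and> \<epsilon> < \<epsilon>0 \<longrightarrow>
              packing_number M \<epsilon> (Theta M \<phi> k A C) \<noteq> \<infinity> \<and>
              c1 * \<epsilon> powr (-2 / (2*k - 1)) \<le> metric_entropy M \<epsilon> (Theta M \<phi> k A C) \<and>
              metric_entropy M \<epsilon> (Theta M \<phi> k A C) \<le> c2 * \<epsilon> powr (-2 / (2*k - 1)))"
proof -
  note ONB = assms(2) and Apos = assms(3) and kpos = assms(4) and Cpos = assms(5)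
  note ctx = ONB Apos kpos Cpos
  define a where "a = aa A C"
  have apos: "a > 0" unfolding a_def by (rule aa_pos[OF ctx])
  define p where "p = 1 / (2*k - 1)"
  define q where "q = -2 / (2*k - 1)"
  define K where "K = ln 3 + 2 * (ln (2 + A / (2 * sqrt C)) + k)"
  define \<kappa> where "\<kappa> = ln 2 - ln 8 / 8 - ln (9/8::real)"
  have kap: "\<kappa> > 0" unfolding \<kappa>_def by (rule kappa_pos)
  have Kpos: "K > 0"
  proof -
    have "ln (2 + A / (2 * sqrt C)) > 0" using Apos Cpos by (intro ln_gt_zero) (auto intro: add_pos_nonneg)
    moreover have "ln (3::real) > 0" by simp
    moreover have "k > 0" using kpos by simp
    ultimately have "0 < ln (2 + A / (2 * sqrt C)) + k" "ln (3::real) > 0" by simp_all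
    then show ?thesis unfolding K_def by (intro add_pos_pos) simp_all
  qed
  define c1 where "c1 = (\<kappa> / 2) * (a\<^sup>2 / 8) powr p"
  define c2 where "c2 = max c1 (2 * K * (8 * C) powr p)"
  define D where "D = 8 * 2 powr (2*k - 1)"
  have Dpos: "D > 0" unfolding D_def by simp
  define \<epsilon>0 where "\<epsilon>0 = min (sqrt (8 * C)) (a / sqrt D)"
  have c1pos: "c1 > 0" unfolding c1_def using kap apos by simp
  have e0pos: "\<epsilon>0 > 0" unfolding \<epsilon>0_def using Cpos apos Dpos by simp
  have main: "packing_number M \<epsilon> (Theta M \<phi> k A C) \<noteq> \<infinity> \<and>
              c1 * \<epsilon> powr q \<le> metric_entropy M \<epsilon> (Theta M \<phi> k A C) \<and>
              metric_entropy M \<epsilon> (Theta M \<phi> k A C) \<le> c2 * \<epsilon> powr q"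
    if e: "0 < \<epsilon>" "\<epsilon> < \<epsilon>0" for \<epsilon>
  proof -
    have "\<epsilon> < sqrt (8 * C)" using e unfolding \<epsilon>0_def by simp
    then have "\<epsilon>\<^sup>2 < (sqrt (8 * C))\<^sup>2" using e by (intro power_strict_mono) auto
    then have e1: "\<epsilon>\<^sup>2 \<le> 8 * C" using Cpos by simp
    have "\<epsilon> < a / sqrt D" using e unfolding \<epsilon>0_def by simp
    then have "\<epsilon> * sqrt D < a" using Dpos by (simp add: field_simps)
    then have "(\<epsilon> * sqrt D)\<^sup>2 < a\<^sup>2" using e Dpos by (intro power_strict_mono) auto
    then have e2: "\<epsilon>\<^sup>2 * (8 * 2 powr (2*k - 1)) \<le> a\<^sup>2" using Dpos unfolding D_def by (simp add: power_mult_distrib)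
    define \<Theta> where "\<Theta> = Theta M \<phi> k A C"
    define X where "X = {enat (card S) | S. finite S \<and> S \<subseteq> \<Theta> \<and>
            (\<forall>f\<in>S. \<forall>g\<in>S. f \<noteq> g \<longrightarrow> L2_dist M f g > \<epsilon>)}"
    have PN: "packing_number M \<epsilon> \<Theta> = Sup X" unfolding packing_number_def X_def by simp
    define J where "J = nat \<lceil>(8 * C / \<epsilon>\<^sup>2) powr (1 / (2*k - 1))\<rceil>"
    note cJ = choose_J[OF kpos Cpos e(1) e1, folded J_def]
    define R where "R = 3 ^ J * (exp (LL A k C J))\<^sup>2"
    have cardS: "real (card S) \<le> R" if "finite S" "S \<subseteq> \<Theta>" "\<forall>f\<in>S. \<forall>g\<in>S. f \<noteq> g \<longrightarrow> L2_dist M f g > \<epsilon>" for S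
      unfolding R_def by (rule upper_card[OF ctx cJ(1) e(1) cJ(2) that[unfolded \<Theta>_def]])
    have SupX: "Sup X \<le> enat (nat \<lfloor>R\<rfloor>)"
    proof (rule Sup_least)
      fix x assume "x \<in> X"
      then have "\<exists>S. x = enat (card S) \<and> finite S \<and> S \<subseteq> \<Theta> \<and>
            (\<forall>f\<in>S. \<forall>g\<in>S. f \<noteq> g \<longrightarrow> L2_dist M f g > \<epsilon>)" unfolding X_def by (rule CollectD)
      then obtain S where Sx: "x = enat (card S) \<and> finite S \<and> S \<subseteq> \<Theta> \<and>
            (\<forall>f\<in>S. \<forall>g\<in>S. f \<noteq> g \<longrightarrow> L2_dist M f g > \<epsilon>)" ..
      have x: "x = enat (card S)" using Sx by (rule conjunct1)
      have S2: "finite S \<and> S \<subseteq> \<Theta> \<and> (\<forall>f\<in>S. \<forall>g\<in>S. f \<noteq> g \<longrightarrow> L2_dist M f g > \<epsilon>)"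
        using Sx by (rule conjunct2)
      have s1: "finite S" using S2 by (rule conjunct1)
      have s2: "S \<subseteq> \<Theta>" using S2 by (rule conjunct2[THEN conjunct1])
      have s3: "\<forall>f\<in>S. \<forall>g\<in>S. f \<noteq> g \<longrightarrow> L2_dist M f g > \<epsilon>" using S2 by (rule conjunct2[THEN conjunct2])
      have "real (card S) \<le> R" by (rule cardS[OF s1 s2 s3])
      then have "card S \<le> nat \<lfloor>R\<rfloor>" by (rule card_floor)
      then show "x \<le> enat (nat \<lfloor>R\<rfloor>)" unfolding x by simp
    qed
    have fin: "Sup X \<noteq> \<infinity>"
    proof
      assume "Sup X = \<infinity>"
      then have "(\<infinity>::enat) \<le> enat (nat \<lfloor>R\<rfloor>)" using SupX by simp
      then show False by simp
    qed
    then obtain m where m: "Sup X = enat m" by (cases "Sup X") auto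
    have Rpos: "R > 0" unfolding R_def by simp
    have mle: "m \<le> nat \<lfloor>R\<rfloor>" using SupX m by simp
    have "real m \<le> real (nat \<lfloor>R\<rfloor>)" using mle by (rule of_nat_mono)
    also have "real (nat \<lfloor>R\<rfloor>) = real_of_int \<lfloor>R\<rfloor>" using Rpos by simp
    also have "\<dots> \<le> R" by (rule of_int_floor_le)
    finally have mR: "real m \<le> R" .
    have ME: "metric_entropy M \<epsilon> \<Theta> = ln (real m)" by (simp only: metric_entropy_def PN m the_enat.simps)
    define n where "n = nat \<lfloor>(a\<^sup>2 / 8 / \<epsilon>\<^sup>2) powr (1 / (2*k - 1))\<rfloor>"
    note cn = choose_n[OF kpos apos e(1) e2, folded n_def]
    obtain P where PP: "P \<subseteq> Pow {1..n} \<and> (\<forall>T\<in>P. \<forall>U\<in>P. T \<noteq> U \<longrightarrow> real (card (sd T U)) > real n / 8)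
        \<and> 2 ^ n \<le> real (card P) * (8 powr (real n / 8) * (9/8) ^ n)"
      using VG[of n] ..
    have P: "P \<subseteq> Pow {1..n}" "\<forall>T\<in>P. \<forall>U\<in>P. T \<noteq> U \<longrightarrow> real (card (sd T U)) > real n / 8"
        "2 ^ n \<le> real (card P) * (8 powr (real n / 8) * (9/8) ^ n)"
      using PP by (rule conjunct1, rule conjunct2[THEN conjunct1], rule conjunct2[THEN conjunct2])
    have npos: "real n > 0" using cn(1) by simp
    have sep: "(\<integral>x. (fT \<phi> A k C n T x - fT \<phi> A k C n U x)\<^sup>2 \<partial>M) > \<epsilon>\<^sup>2"
      if TU: "T \<in> P" "U \<in> P" "T \<noteq> U" for T U
    proof -
      have sub: "T \<subseteq> {1..n}" "U \<subseteq> {1..n}" using P(1) TU by auto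
      have d2: "(a * real n powr (-k))\<^sup>2 > 0" using apos npos by simp
      have "\<epsilon>\<^sup>2 \<le> (a * real n powr (-k))\<^sup>2 * real n / 8"
        using cn(2) powr_sq_mult[OF npos, of a k] by simp
      also have "\<dots> < (a * real n powr (-k))\<^sup>2 * real (card (sd T U))"
        using P(2) TU d2 by (simp add: mult_strict_left_mono)
      also have "\<dots> = (\<integral>x. (fT \<phi> A k C n T x - fT \<phi> A k C n U x)\<^sup>2 \<partial>M)"
        using fT_dist[OF ctx sub] unfolding a_def by simp
      finally show ?thesis .
    qed
    define S0 where "S0 = fT \<phi> A k C n ` P"
    have finP: "finite P" using P(1) finite_subset by (metis finite_Pow_iff finite_atLeastAtMost)
    have inj: "inj_on (fT \<phi> A k C n) P"
    proof (rule inj_onI, rule ccontr)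
      fix T U assume "T \<in> P" "U \<in> P" "fT \<phi> A k C n T = fT \<phi> A k C n U" "T \<noteq> U"
      then show False using sep[of T U] e(1) by simp
    qed
    have S0sub: "S0 \<subseteq> \<Theta>" unfolding S0_def \<Theta>_def using fT_Theta[OF ctx _ cn(1)] P(1) by blast
    have S0pack: "\<forall>f\<in>S0. \<forall>g\<in>S0. f \<noteq> g \<longrightarrow> L2_dist M f g > \<epsilon>"
    proof (intro ballI impI)
      fix f g assume "f \<in> S0" "g \<in> S0" "f \<noteq> g"
      then obtain T U where TU: "T \<in> P" "U \<in> P" "f = fT \<phi> A k C n T" "g = fT \<phi> A k C n U"
        unfolding S0_def by blast
      then have "T \<noteq> U" using \<open>f \<noteq> g\<close> by blast
      then have "\<epsilon>\<^sup>2 < (\<integral>x. (f x - g x)\<^sup>2 \<partial>M)"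
        using sep[OF TU(1,2)] TU(3,4) by blast
      then have "sqrt (\<epsilon>\<^sup>2) < sqrt (\<integral>x. (f x - g x)\<^sup>2 \<partial>M)"
        by (simp only: real_sqrt_less_iff)
      then show "L2_dist M f g > \<epsilon>" unfolding L2_dist_def using e(1) by simp
    qed
    have "enat (card S0) \<in> X" unfolding X_def using S0sub S0pack finP S0_def by blast
    then have "enat (card S0) \<le> Sup X" by (rule Sup_upper)
    then have cPm: "card P \<le> m" using m card_image[OF inj] unfolding S0_def by simp
    have cP1: "card P \<ge> 1"
    proof (rule ccontr)
      assume "\<not> card P \<ge> 1"
      then have "card P = 0" by simp
      then have "(2::real) ^ n \<le> 0" using P(3) by simp
      moreover have "(0::real) < 2 ^ n" by simp
      ultimately show False by linarith
    qed
    have lnP: "\<kappa> * real n \<le> ln (real (card P))"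
    proof -
      have pos1: "8 powr (real n / 8) * (9/8::real) ^ n > 0" by simp
      have "ln (2 ^ n) \<le> ln (real (card P) * (8 powr (real n / 8) * (9/8) ^ n))"
        using P(3) cP1 pos1 by (subst ln_le_cancel_iff) auto
      also have "\<dots> = ln (real (card P)) + ln (8 powr (real n / 8)) + ln ((9/8) ^ n)"
        using cP1 pos1 by (simp add: ln_mult)
      also have "ln (8 powr (real n / 8)) = real n / 8 * ln 8" by (simp add: ln_powr)
      also have "ln ((9/8::real) ^ n) = real n * ln (9/8)" by (rule ln_realpow)
      finally have "real n * ln 2 \<le> ln (real (card P)) + real n / 8 * ln 8 + real n * ln (9/8)"
        by (simp add: ln_realpow)
      then show ?thesis unfolding \<kappa>_def by (simp add: algebra_simps)
    qed
    have m1: "real m \<ge> 1" using cPm cP1 by simp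
    have lower: "c1 * \<epsilon> powr q \<le> ln (real m)"
    proof -
      have "c1 * \<epsilon> powr q = \<kappa> * ((1/2) * ((a\<^sup>2 / 8) powr (1 / (2*k - 1)) * \<epsilon> powr (-2 / (2*k - 1))))"
        unfolding c1_def p_def q_def by simp
      also have "\<dots> \<le> \<kappa> * real n" using cn(3) kap by (intro mult_left_mono) auto
      also have "\<dots> \<le> ln (real (card P))" by (rule lnP)
      also have "\<dots> \<le> ln (real m)" using cPm cP1 by (subst ln_le_cancel_iff) auto
      finally show ?thesis .
    qed
    have upper: "ln (real m) \<le> c2 * \<epsilon> powr q"
    proof -
      have "ln (real m) \<le> ln R" using m1 mR Rpos by (subst ln_le_cancel_iff) auto
      also have "ln R = real J * ln 3 + 2 * LL A k C J"
        unfolding R_def by (simp add: ln_mult ln_realpow power2_eq_square)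
      also have "\<dots> \<le> real J * ln 3 + 2 * (real J * (ln (2 + A / (2 * sqrt C)) + k))"
        using LL_bound[OF ctx cJ(1)] by simp
      also have "\<dots> = real J * K" unfolding K_def by (simp add: algebra_simps)
      also have "\<dots> \<le> (2 * ((8 * C) powr (1 / (2*k - 1)) * \<epsilon> powr (-2 / (2*k - 1)))) * K"
        using cJ(3) Kpos by (intro mult_right_mono) auto
      also have "\<dots> = (2 * K * (8 * C) powr p) * \<epsilon> powr q" unfolding p_def q_def by simp
      also have "\<dots> \<le> c2 * \<epsilon> powr q" unfolding c2_def by (intro mult_right_mono) auto
      finally show ?thesis .
    qed
    show ?thesis using fin lower upper ME PN unfolding \<Theta>_def by simp
  qed
  have "c1 \<le> c2" unfolding c2_def by simp
  then show ?thesis using c1pos e0pos main unfolding q_def by blast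
qed


end
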